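(* Let $k$ be a field of characteristic $0$, let $\mathcal C$ be a small category with finitely many objects $X_1,\dots,X_n$, and let $\alpha:L(\mathcal C)\to k$ be a pseudocharacter of $\mathcal C$. Let $A$ be the $k$-algebra of matrices $x=(x_{ij})_{1\le i,j\le n}$ with $x_{ij}\in k\,\mathrm{Hom}_{\mathcal C}(X_j,X_i)$ (finite $k$-linear combinations of morphisms), with multiplication $(xy)_{ij}=\sum_{l}x_{il}y_{lj}$ given by bilinearly extended composition (i.e. $A=\mathrm{End}(X_1\oplus\dots\oplus X_n)$ in the additive envelope of the $k$-linearization of $\mathcal C$), and let $\tau:A\to k$, $\tau(x)=\sum_{i=1}^n\alpha_{X_i}(x_{ii})$. Then $\tau(xy)=\tau(yx)$, $\tau$ is a pseudocharacter of $A$, and $$\deg_\tau(A)=\sum_{i=1}^n\deg_\alpha(X_i).$$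
   Context: Loops. $L(\mathcal C)$ is the set of pairs $(X,\beta)$, $\beta\in\mathrm{End}_{\mathcal C}(X)$, modulo the equivalence relation generated by $(X,\gamma\beta)\sim(Y,\beta\gamma)$ for $\beta:X\to Y$, $\gamma:Y\to X$. Pseudocharacters of algebras. For a $k$-algebra $A$ and a $k$-linear $\tau:A\to k$ with $\tau(ab)=\tau(ba)$, and $a_1,\dots,a_n\in A$, set $S^\tau_n(a_1,\dots,a_n)=\sum_{\sigma\in S_n}\mathrm{sgn}(\sigma)\prod_{c}\tau(a_{i_1}a_{i_2}\cdots a_{i_r})$, the product over all cycles $c=(i_1\,i_2\,\dots\,i_r)$ of $\sigma$ (fixed points included), where $\sigma(i_j)=i_{j+1}$. (This is the $\alpha$-evaluation of the closure of $(a_1\otimes\dots\otimes a_n)$ composed with the antisymmetrizer $\sum_\sigma\mathrm{sgn}(\sigma)\sigma$ in the Brauer category.) The degree $\deg_\tau(A)$ is the least integer $d\ge0$ such that $S^\tau_{d+1}$ vanishes identically on $A^{d+1}$ ($\infty$ if none); $\tau$ is a pseudocharacter of $A$ if $\deg_\tau(A)<\infty$. Pseudocharacters of categories. For $\alpha:L(\mathcal C)\to k$ and an object $X$, let $\alpha_X:k\,\mathrm{End}_{\mathcal C}(X)\to k$ be the linear extension of $\beta\mapsto\alpha([(X,\beta)])$ (it satisfies $\alpha_X(ab)=\alpha_X(ba)$). Put $\deg_\alpha(X)=\deg_{\alpha_X}(k\,\mathrm{End}_{\mathcal C}(X))$. The map $\alpha$ is a pseudocharacter of $\mathcal C$ (equivalently,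 a pseudo-TQFT for the Brauer envelope of $\mathcal C$) if $\deg_\alpha(X)<\infty$ for every object $X$. *)

theory Defs
  imports "HOL-Combinatorics.Permutations" "HOL-Library.Extended_Nat"
begin

fun mprod :: "('x \<Rightarrow> 'x \<Rightarrow> 'x) \<Rightarrow> 'x list \<Rightarrow> 'x" where
  "mprod mul [] = undefined"
| "mprod mul [x] = x"
| "mprod mul (x # y # ys) = mul x (mprod mul (y # ys))"

definition orb :: "(nat \<Rightarrow> nat) \<Rightarrow> nat \<Rightarrow> nat set" where
  "orb p i = {(p ^^ k) i | k. True}"

text \<open>Each cycle is represented by its least element (the value does not depend on
  this choice since tau is a trace).\<close>
definition cyc_word :: "('x \<Rightarrow> 'x \<Rightarrow> 'x) \<Rightarrow> (nat \<Rightarrow> 'x) \<Rightarrow> (nat \<Rightarrow> nat) \<Rightarrow> nat \<Rightarrow> 'x" where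
  "cyc_word mul a p i = mprod mul (map (\<lambda>k. a ((p ^^ k) i)) [0..<card (orb p i)])"

text \<open>S^tau_n(a_1,...,a_n) (indices shifted to 0..n-1).\<close>
definition S_tau :: "('x \<Rightarrow> 'x \<Rightarrow> 'x) \<Rightarrow> ('x \<Rightarrow> 'k::comm_ring_1) \<Rightarrow> nat \<Rightarrow> (nat \<Rightarrow> 'x) \<Rightarrow> 'k" where
  "S_tau mul tau n a =
     (\<Sum>p\<in>{p. p permutes {..<n}}. of_int (sign p) *
        (\<Prod>i\<in>{i. i < n \<and> i = Min (orb p i)}. tau (cyc_word mul a p i)))"

definition S_vanishes :: "'x set \<Rightarrow> ('x \<Rightarrow> 'x \<Rightarrow> 'x) \<Rightarrow> ('x \<Rightarrow> 'k::comm_ring_1) \<Rightarrow> nat \<Rightarrow> bool" where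
  "S_vanishes A mul tau n \<longleftrightarrow> (\<forall>a. (\<forall>i<n. a i \<in> A) \<longrightarrow> S_tau mul tau n a = 0)"

definition alg_deg :: "'x set \<Rightarrow> ('x \<Rightarrow> 'x \<Rightarrow> 'x) \<Rightarrow> ('x \<Rightarrow> 'k::comm_ring_1) \<Rightarrow> enat" where
  "alg_deg A mul tau =
     (if \<exists>d. S_vanishes A mul tau (Suc d)
      then enat (LEAST d. S_vanishes A mul tau (Suc d)) else \<infinity>)"

text \<open>Hom i j = morphisms from object i to object j; cmp g f = g \<circ> f
  (first f, then g); idm i = identity of object i.\<close>
definition is_category :: "nat \<Rightarrow> (nat \<Rightarrow> nat \<Rightarrow> 'm set) \<Rightarrow> ('m \<Rightarrow> 'm \<Rightarrow> 'm) \<Rightarrow> (nat \<Rightarrow> 'm) \<Rightarrow> bool" where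
  "is_category n Hom cmp idm \<longleftrightarrow>
     (\<forall>i<n. \<forall>j<n. \<forall>i'<n. \<forall>j'<n. (i, j) \<noteq> (i', j') \<longrightarrow> Hom i j \<inter> Hom i' j' = {}) \<and>
     (\<forall>i<n. \<forall>j<n. \<forall>l<n. \<forall>f\<in>Hom i j. \<forall>g\<in>Hom j l. cmp g f \<in> Hom i l) \<and>
     (\<forall>i<n. \<forall>j<n. \<forall>l<n. \<forall>m<n. \<forall>f\<in>Hom i j. \<forall>g\<in>Hom j l. \<forall>h\<in>Hom l m.
         cmp h (cmp g f) = cmp (cmp h g) f) \<and>
     (\<forall>i<n. idm i \<in> Hom i i) \<and>
     (\<forall>i<n. \<forall>j<n. \<forall>f\<in>Hom i j. cmp f (idm i) = f \<and> cmp (idm j) f = f)"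

definition loops :: "nat \<Rightarrow> (nat \<Rightarrow> nat \<Rightarrow> 'm set) \<Rightarrow> (nat \<times> 'm) set" where
  "loops n Hom = {(i, b). i < n \<and> b \<in> Hom i i}"

definition loop_rel :: "nat \<Rightarrow> (nat \<Rightarrow> nat \<Rightarrow> 'm set) \<Rightarrow> ('m \<Rightarrow> 'm \<Rightarrow> 'm) \<Rightarrow> ((nat \<times> 'm) \<times> (nat \<times> 'm)) set" where
  "loop_rel n Hom cmp =
     {((i, cmp g b), (j, cmp b g)) | i j b g. i < n \<and> j < n \<and> b \<in> Hom i j \<and> g \<in> Hom j i}"

definition loop_equiv :: "nat \<Rightarrow> (nat \<Rightarrow> nat \<Rightarrow> 'm set) \<Rightarrow> ('m \<Rightarrow> 'm \<Rightarrow> 'm) \<Rightarrow> ((nat \<times> 'm) \<times> (nat \<times> 'm)) set" where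
  "loop_equiv n Hom cmp = (loop_rel n Hom cmp \<union> (loop_rel n Hom cmp)\<inverse>)\<^sup>*"

text \<open>A map alpha : L(C) \<rightarrow> k, i.e. a function on loops constant on equivalence classes.\<close>
definition loop_function :: "nat \<Rightarrow> (nat \<Rightarrow> nat \<Rightarrow> 'm set) \<Rightarrow> ('m \<Rightarrow> 'm \<Rightarrow> 'm) \<Rightarrow> (nat \<times> 'm \<Rightarrow> 'k) \<Rightarrow> bool" where
  "loop_function n Hom cmp \<alpha> \<longleftrightarrow> (\<forall>(p, q) \<in> loop_equiv n Hom cmp. \<alpha> p = \<alpha> q)"

text \<open>k S: finite k-linear combinations of elements of S (finitely supported functions).\<close>
definition lin :: "'m set \<Rightarrow> ('m \<Rightarrow> 'k::zero) set" where
  "lin S = {a. finite {f. a f \<noteq> 0} \<and> {f. a f \<noteq> 0} \<subseteq> S}"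

definition conv :: "('m \<Rightarrow> 'm \<Rightarrow> 'm) \<Rightarrow> ('m \<Rightarrow> 'k::comm_ring_1) \<Rightarrow> ('m \<Rightarrow> 'k) \<Rightarrow> 'm \<Rightarrow> 'k" where
  "conv cmp a b h = (\<Sum>f\<in>{f. a f \<noteq> 0}. \<Sum>g\<in>{g. b g \<noteq> 0}. if cmp f g = h then a f * b g else 0)"

definition alpha_lin :: "(nat \<times> 'm \<Rightarrow> 'k::comm_ring_1) \<Rightarrow> nat \<Rightarrow> ('m \<Rightarrow> 'k) \<Rightarrow> 'k" where
  "alpha_lin \<alpha> i a = (\<Sum>b\<in>{b. a b \<noteq> 0}. a b * \<alpha> (i, b))"

definition obj_deg :: "(nat \<Rightarrow> nat \<Rightarrow> 'm set) \<Rightarrow> ('m \<Rightarrow> 'm \<Rightarrow> 'm) \<Rightarrow> (nat \<times> 'm \<Rightarrow> 'k::comm_ring_1) \<Rightarrow> nat \<Rightarrow> enat" where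
  "obj_deg Hom cmp \<alpha> i = alg_deg (lin (Hom i i)) (conv cmp) (alpha_lin \<alpha> i)"

definition pseudocharacter_cat :: "nat \<Rightarrow> (nat \<Rightarrow> nat \<Rightarrow> 'm set) \<Rightarrow> ('m \<Rightarrow> 'm \<Rightarrow> 'm) \<Rightarrow> (nat \<times> 'm \<Rightarrow> 'k::comm_ring_1) \<Rightarrow> bool" where
  "pseudocharacter_cat n Hom cmp \<alpha> \<longleftrightarrow>
     loop_function n Hom cmp \<alpha> \<and> (\<forall>i<n. obj_deg Hom cmp \<alpha> i \<noteq> \<infinity>)"

definition mat_alg :: "nat \<Rightarrow> (nat \<Rightarrow> nat \<Rightarrow> 'm set) \<Rightarrow> (nat \<Rightarrow> nat \<Rightarrow> 'm \<Rightarrow> 'k::zero) set" where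
  "mat_alg n Hom = {x. (\<forall>i<n. \<forall>j<n. x i j \<in> lin (Hom j i)) \<and>
                       (\<forall>i j. (n \<le> i \<or> n \<le> j) \<longrightarrow> x i j = (\<lambda>_. 0))}"

definition mat_mult :: "nat \<Rightarrow> ('m \<Rightarrow> 'm \<Rightarrow> 'm) \<Rightarrow> (nat \<Rightarrow> nat \<Rightarrow> 'm \<Rightarrow> 'k::comm_ring_1)
                        \<Rightarrow> (nat \<Rightarrow> nat \<Rightarrow> 'm \<Rightarrow> 'k) \<Rightarrow> (nat \<Rightarrow> nat \<Rightarrow> 'm \<Rightarrow> 'k)" where
  "mat_mult n cmp x y = (\<lambda>i j h. if i < n \<and> j < n then (\<Sum>l<n. conv cmp (x i l) (y l j) h) else 0)"

definition mat_trace :: "nat \<Rightarrow> (nat \<times> 'm \<Rightarrow> 'k::comm_ring_1) \<Rightarrow> (nat \<Rightarrow> nat \<Rightarrow> 'm \<Rightarrow> 'k) \<Rightarrow> 'k" where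
  "mat_trace n \<alpha> x = (\<Sum>i<n. alpha_lin \<alpha> i (x i i))"

end

theory Submission imports Defs "HOL-Library.Function_Algebras" "HOL-Combinatorics.Orbits" begin

lemma orb_eq_orbit: "permutation p \<Longrightarrow> orb p i = orbit p i"
  unfolding orb_def by (simp add: orbit_altdef_permutation)

lemma in_orb: "i \<in> orb p i"
  unfolding orb_def by (auto intro: exI[of _ 0])

lemma orb_funpow: "permutation p \<Longrightarrow> orb p ((p ^^ k) i) = orb p i"
  by (induction k) (simp_all add: orb_eq_orbit permutation_orbit_step)

lemma orb_same: "permutation p \<Longrightarrow> j \<in> orb p i \<Longrightarrow> orb p j = orb p i"
proof -
  assume p: "permutation p" and j: "j \<in> orb p i"
  then obtain k where "j = (p ^^ k) i" unfolding orb_def by auto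
  then show ?thesis using orb_funpow[OF p] by simp
qed

lemma finite_orb: "permutation p \<Longrightarrow> finite (orb p i)"
  by (simp add: orb_eq_orbit finite_orbit permutation_self_in_orbit)

lemma card_orb_dist: "permutation p \<Longrightarrow> card (orb p i) = funpow_dist1 p i i"
proof -
  assume p: "permutation p"
  have s: "i \<in> orbit p i" by (simp add: p permutation_self_in_orbit)
  show ?thesis unfolding orb_eq_orbit[OF p] orbit_conv_funpow_dist1[OF s]
    using inj_on_funpow_dist1[OF s] by (simp add: card_image)
qed

lemma card_orb_pos: "permutation p \<Longrightarrow> 0 < card (orb p i)"
  by (simp add: card_orb_dist)

lemma funpow_card_orb: "permutation p \<Longrightarrow> (p ^^ card (orb p i)) i = i"
  using funpow_dist1_prop[OF permutation_self_in_orbit, of p i] by (simp add: card_orb_dist)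

lemma card_orb_char:
  assumes p: "permutation p" and L: "0 < L" "(p ^^ L) i = i" and ne: "\<And>t. 0 < t \<Longrightarrow> t < L \<Longrightarrow> (p ^^ t) i \<noteq> i"
  shows "card (orb p i) = L"
proof -
  have s: "i \<in> orbit p i" by (simp add: p permutation_self_in_orbit)
  have "funpow_dist1 p i i \<le> L" using funpow_dist1_le_self[OF L(2) L(1) s] .
  moreover have "\<not> funpow_dist1 p i i < L"
    using ne[of "funpow_dist1 p i i"] funpow_dist1_prop[OF s] by auto
  ultimately show ?thesis by (simp add: card_orb_dist[OF p])
qed

lemma orb_sub: "p permutes {..<N} \<Longrightarrow> i < N \<Longrightarrow> orb p i \<subseteq> {..<N}"
proof -
  assume p: "p permutes {..<N}" and i: "i < N"
  have "(p ^^ k) i < N" for k by (induction k) (use i permutes_in_image[OF p] in auto)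
  then show ?thesis unfolding orb_def by auto
qed

lemma funpow_lt: "p permutes {..<(N::nat)} \<Longrightarrow> i < N \<Longrightarrow> (p ^^ k) i < N"
  using orb_sub[of p N i] unfolding orb_def by auto

lemma perm_of_permutes: "p permutes {..<(N::nat)} \<Longrightarrow> permutation p"
  using permutation_permutes by blast

definition reps :: "(nat \<Rightarrow> nat) \<Rightarrow> nat \<Rightarrow> nat set" where
  "reps p N = {i. i < N \<and> i = Min (orb p i)}"

lemma finite_reps: "finite (reps p N)"
  unfolding reps_def by auto

lemma inv_iter:
  assumes p: "p permutes {..<(N::nat)}" and g: "\<And>i. i < N \<Longrightarrow> g (p i) = g i" and i: "i < N"
  shows "g ((p ^^ k) i) = g i"
proof (induction k)
  case (Suc k)
  have "(p ^^ k) i < N" using funpow_lt[OF p i] .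
  then show ?case using Suc g by simp
qed simp

lemma inv_orb:
  assumes p: "p permutes {..<(N::nat)}" and g: "\<And>i. i < N \<Longrightarrow> g (p i) = g i" and i: "i < N"
    and j: "j \<in> orb p i"
  shows "g j = g i"
  using j inv_iter[where g=g, OF p g i] unfolding orb_def by auto

lemma Min_orb_in: "p permutes {..<(N::nat)} \<Longrightarrow> Min (orb p i) \<in> orb p i"
  using finite_orb[OF perm_of_permutes] in_orb by (metis Min_in empty_iff)

lemma reps_prod_split:
  assumes p: "p permutes {..<(N::nat)}" and g: "\<And>i. i < N \<Longrightarrow> g (p i) = g i" and j: "j < N"
  shows "(\<Prod>i\<in>reps p N. g i) = g j * (\<Prod>i\<in>reps p N - orb p j. g i)"
proof -
  have pp: "permutation p" using perm_of_permutes[OF p] .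
  define m0 where "m0 = Min (orb p j)"
  have m0O: "m0 \<in> orb p j" unfolding m0_def using Min_orb_in[OF p] .
  have om0: "orb p m0 = orb p j" using orb_same[OF pp m0O] .
  have m0N: "m0 < N" using orb_sub[OF p j] m0O by auto
  have m0r: "m0 \<in> reps p N" unfolding reps_def using m0N om0 m0_def by simp
  have eq: "reps p N - {m0} = reps p N - orb p j"
  proof
    show "reps p N - {m0} \<subseteq> reps p N - orb p j"
    proof
      fix i assume i: "i \<in> reps p N - {m0}"
      show "i \<in> reps p N - orb p j"
      proof (rule ccontr)
        assume "i \<notin> reps p N - orb p j"
        then have "i \<in> orb p j" using i by auto
        then have "orb p i = orb p j" using orb_same[OF pp] by blast
        then show False using i unfolding reps_def m0_def by auto
      qed
    qed
  qed (use m0O in auto)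
  have "(\<Prod>i\<in>reps p N. g i) = g m0 * (\<Prod>i\<in>reps p N - {m0}. g i)"
    using prod.remove[OF finite_reps m0r] by simp
  moreover have "g m0 = g j" using inv_orb[where g=g, OF p g j m0O] .
  ultimately show ?thesis using eq by simp
qed

lemma S_tau_reps: "S_tau mul tau N a = (\<Sum>p\<in>{p. p permutes {..<N}}. of_int (sign p) * (\<Prod>i\<in>reps p N. tau (cyc_word mul a p i)))"
  unfolding S_tau_def reps_def ..

lemma cyc_word_cong:
  assumes p: "p permutes {..<(N::nat)}" and i: "i < N" and ab: "\<And>j. j < N \<Longrightarrow> a j = b j"
  shows "cyc_word mul a p i = cyc_word mul b p i"
  unfolding cyc_word_def using ab funpow_lt[OF p i] by (intro arg_cong[where f="mprod mul"]) auto

lemma S_cong: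
  assumes ab: "\<And>j. j < N \<Longrightarrow> a j = b j"
  shows "S_tau mul tau N a = S_tau mul tau N b"
  unfolding S_tau_reps
  by (intro sum.cong refl arg_cong2[where f="(*)"] prod.cong) (auto simp: reps_def intro!: arg_cong[where f=tau] cyc_word_cong[OF _ _ ab])

lemma mprod_Cons: "ys \<noteq> [] \<Longrightarrow> mprod mul (x # ys) = mul x (mprod mul ys)"
  by (cases ys) auto

locale talg =
  fixes A :: "'x::ab_group_add set" and mul :: "'x \<Rightarrow> 'x \<Rightarrow> 'x" and tau :: "'x \<Rightarrow> 'k::comm_ring_1"
  assumes closed: "\<lbrakk>a \<in> A; b \<in> A\<rbrakk> \<Longrightarrow> mul a b \<in> A"
    and assoc: "\<lbrakk>a \<in> A; b \<in> A; c \<in> A\<rbrakk> \<Longrightarrow> mul (mul a b) c = mul a (mul b c)"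
    and trace: "\<lbrakk>a \<in> A; b \<in> A\<rbrakk> \<Longrightarrow> tau (mul a b) = tau (mul b a)"
    and zero_in: "0 \<in> A"
    and add_in: "\<lbrakk>a \<in> A; b \<in> A\<rbrakk> \<Longrightarrow> a + b \<in> A"
    and distl: "\<lbrakk>a \<in> A; b \<in> A; c \<in> A\<rbrakk> \<Longrightarrow> mul a (b + c) = mul a b + mul a c"
    and distr: "\<lbrakk>a \<in> A; b \<in> A; c \<in> A\<rbrakk> \<Longrightarrow> mul (b + c) a = mul b a + mul c a"
    and tau_add: "\<lbrakk>a \<in> A; b \<in> A\<rbrakk> \<Longrightarrow> tau (a + b) = tau a + tau b"
begin

abbreviation S where "S \<equiv> S_tau mul tau"

lemma mprod_in: "xs \<noteq> [] \<Longrightarrow> set xs \<subseteq> A \<Longrightarrow> mprod mul xs \<in> A"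
proof (induction xs)
  case (Cons x ys)
  then show ?case by (cases ys) (auto simp: closed)
qed simp

lemma mprod_snoc: "ys \<noteq> [] \<Longrightarrow> set ys \<subseteq> A \<Longrightarrow> x \<in> A \<Longrightarrow> mprod mul (ys @ [x]) = mul (mprod mul ys) x"
proof (induction ys)
  case (Cons y zs)
  show ?case
  proof (cases "zs = []")
    case True then show ?thesis by simp
  next
    case False
    have "mprod mul ((y # zs) @ [x]) = mul y (mprod mul (zs @ [x]))"
      by (simp add: mprod_Cons)
    also have "\<dots> = mul y (mul (mprod mul zs) x)" using Cons False by simp
    also have "\<dots> = mul (mul y (mprod mul zs)) x"
      using Cons False by (simp add: assoc mprod_in)
    finally show ?thesis using False by (simp add: mprod_Cons)
  qed
qed simp

lemma tau_rot: "x \<in> A \<Longrightarrow> set T \<subseteq> A \<Longrightarrow> tau (mprod mul (x # T)) = tau (mprod mul (T @ [x]))"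
  by (cases "T = []") (auto simp: mprod_Cons mprod_snoc trace mprod_in)

lemma cyc_in:
  assumes p: "p permutes {..<(N::nat)}" and i: "i < N" and a: "\<And>j. j < N \<Longrightarrow> a j \<in> A"
  shows "cyc_word mul a p i \<in> A"
proof -
  have "0 < card (orb p i)" using card_orb_pos[OF perm_of_permutes[OF p]] .
  then show ?thesis unfolding cyc_word_def
    by (intro mprod_in) (auto intro: a funpow_lt[OF p i])
qed

lemma cyc_rot:
  assumes p: "p permutes {..<(N::nat)}" and i: "i < N" and a: "\<And>j. j < N \<Longrightarrow> a j \<in> A"
  shows "tau (cyc_word mul a p (p i)) = tau (cyc_word mul a p i)"
proof -
  have pp: "permutation p" using perm_of_permutes[OF p] .
  define L where "L = card (orb p i)"
  have L0: "0 < L" unfolding L_def using card_orb_pos[OF pp] .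
  have Lp: "card (orb p (p i)) = L" unfolding L_def using orb_funpow[OF pp, of 1 i] by simp
  define f where "f = (\<lambda>k. a ((p ^^ k) i))"
  define T where "T = map f [1..<L]"
  have TA: "set T \<subseteq> A" unfolding T_def f_def using a funpow_lt[OF p i] by auto
  have fA: "f 0 \<in> A" unfolding f_def using a i by simp
  have w1: "cyc_word mul a p i = mprod mul (f 0 # T)"
    unfolding cyc_word_def T_def f_def L_def[symmetric] using L0 by (simp add: upt_conv_Cons)
  have "map (\<lambda>k. a ((p ^^ k) (p i))) [0..<L] = map (\<lambda>k. f (Suc k)) [0..<L]"
    unfolding f_def by (simp add: funpow_swap1)
  also have "\<dots> = map f [1..<Suc L]"
    by (simp only: map_Suc_upt[symmetric] map_map comp_def One_nat_def)
  also have "\<dots> = T @ [f 0]"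
    unfolding T_def using L0 by (simp add: f_def L_def funpow_card_orb[OF pp])
  finally have w2: "cyc_word mul a p (p i) = mprod mul (T @ [f 0])"
    unfolding cyc_word_def Lp by simp
  show ?thesis unfolding w1 w2 using tau_rot[OF fA TA] by simp
qed

end

lemma orb_closed: "x \<in> U \<Longrightarrow> (\<And>y. y \<in> U \<Longrightarrow> f y \<in> U) \<Longrightarrow> orb f x \<subseteq> U"
proof -
  assume x: "x \<in> U" and c: "\<And>y. y \<in> U \<Longrightarrow> f y \<in> U"
  have "(f ^^ k) x \<in> U" for k by (induction k) (auto simp: x c)
  then show ?thesis unfolding orb_def by auto
qed

lemma orb_step: "permutation p \<Longrightarrow> orb p (p y) = orb p y"
  using orb_funpow[of p 1 y] by simp

lemma p_in_orb: "permutation p \<Longrightarrow> y \<in> orb p x \<Longrightarrow> p y \<in> orb p x"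
  by (metis in_orb orb_same orb_step)

lemma funpow_ne_card: "permutation p \<Longrightarrow> 0 < t \<Longrightarrow> t < card (orb p i) \<Longrightarrow> (p ^^ t) i \<noteq> i"
  by (simp add: card_orb_dist funpow_dist1_least)

lemma permutes_lessSuc: "p permutes {..<Suc m} \<Longrightarrow> p m = m \<Longrightarrow> p permutes {..<m}"
  unfolding permutes_def by (metis lessThan_iff less_SucE)

context talg begin

lemma surgery:
  assumes p': "p' permutes {..<m}" and j: "j < m" and a: "\<And>i. i < Suc m \<Longrightarrow> a i \<in> A"
  defines "p \<equiv> p' \<circ> Transposition.transpose j m"
  defines "a' \<equiv> a(j := mul (a j) (a m))"
  shows "(\<Prod>i\<in>reps p (Suc m). tau (cyc_word mul a p i)) = (\<Prod>i\<in>reps p' m. tau (cyc_word mul a' p' i))"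
proof -
  have p'S: "p' permutes {..<Suc m}" using permutes_subset[OF p'] by auto
  have p: "p permutes {..<Suc m}" unfolding p_def using p'S j
    by (intro permutes_compose permutes_swap_id) auto
  have pp: "permutation p" using perm_of_permutes[OF p] .
  have pp': "permutation p'" using perm_of_permutes[OF p'] .
  have p'm: "p' m = m" using p' by (simp add: permutes_def)
  have jm: "j \<noteq> m" using j by simp
  have pj: "p j = m" unfolding p_def using p'm by simp
  have pm: "p m = p' j" unfolding p_def by simp
  have pother: "p y = p' y" if "y \<noteq> j" "y \<noteq> m" for y
    unfolding p_def using that by (simp add: transpose_apply_other)
  define Qc where "Qc = orb p' j"
  define Pc where "Pc = orb p j"
  have Qcsub: "Qc \<subseteq> {..<m}" unfolding Qc_def using orb_sub[OF p' j] .
  have mQc: "m \<notin> Qc" using Qcsub by auto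
  have jQc: "j \<in> Qc" unfolding Qc_def by (rule in_orb)
  have jPc: "j \<in> Pc" unfolding Pc_def by (rule in_orb)
  have mPc: "m \<in> Pc" unfolding Pc_def orb_def by (rule CollectI, rule exI[of _ 1]) (simp add: pj)
  have OQ: "Pc \<subseteq> insert m Qc"
    unfolding Pc_def
  proof (rule orb_closed)
    show "j \<in> insert m Qc" using jQc by simp
    fix y assume y: "y \<in> insert m Qc"
    show "p y \<in> insert m Qc"
    proof (cases "y = j")
      case True then show ?thesis by (simp add: pj)
    next
      case False
      show ?thesis
      proof (cases "y = m")
        case True then show ?thesis using pm Qc_def orb_funpow[OF pp', of 1 j] in_orb[of "p' j" p'] by auto
      next
        case False
        with y have yQc: "y \<in> Qc" by simp
        have "p' y \<in> Qc" using yQc unfolding Qc_def by (rule p_in_orb[OF pp'])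
        then show ?thesis using pother[OF \<open>y \<noteq> j\<close> False] by simp
      qed
    qed
  qed
  have QcO: "Qc \<subseteq> Pc"
    unfolding Qc_def
  proof (rule orb_closed)
    show "j \<in> Pc" by (rule jPc)
    fix y assume y: "y \<in> Pc"
    have pyO: "p y \<in> Pc" using y unfolding Pc_def by (rule p_in_orb[OF pp])
    show "p' y \<in> Pc"
    proof (cases "y = j")
      case True then show ?thesis using pm p_in_orb[OF pp mPc[unfolded Pc_def]] unfolding Pc_def by simp
    next
      case False
      show ?thesis
      proof (cases "y = m")
        case True then show ?thesis using p'm mPc by simp
      next
        case False then show ?thesis using pother[OF \<open>y \<noteq> j\<close> False] pyO by simp
      qed
    qed
  qed
  have compl: "p y \<notin> Pc" if "y \<notin> Pc" for y
  proof
    assume "p y \<in> Pc"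
    then have "orb p (p y) = Pc" unfolding Pc_def using orb_same[OF pp] by blast
    then have "orb p y = Pc" using orb_funpow[OF pp, of 1 y] by simp
    then show False using that in_orb[of y p] by simp
  qed
  have iter: "(p ^^ k) i = (p' ^^ k) i \<and> (p ^^ k) i \<notin> Pc" if "i \<notin> Pc" for i k
  proof (induction k)
    case (Suc k)
    have ne: "(p ^^ k) i \<noteq> j" "(p ^^ k) i \<noteq> m" using Suc jPc mPc by auto
    show ?case using Suc compl[of "(p ^^ k) i"] pother[OF ne] by auto
  qed (simp add: that)
  have orbeq: "orb p i = orb p' i" if "i \<notin> Pc" for i
    unfolding orb_def using iter[OF that] by auto
  have cyceq: "cyc_word mul a p i = cyc_word mul a' p' i" if "i \<notin> Pc" for i
  proof -
    have "(p ^^ k) i \<noteq> j" for k using iter[OF that, of k] jPc by auto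
    then show ?thesis unfolding cyc_word_def orbeq[OF that] a'_def using iter[OF that]
      by (intro arg_cong[where f="mprod mul"]) auto
  qed
  have repseq: "reps p (Suc m) - Pc = reps p' m - Qc"
  proof (intro set_eqI iffI)
    fix i assume "i \<in> reps p (Suc m) - Pc"
    then show "i \<in> reps p' m - Qc" using QcO mPc orbeq unfolding reps_def
      by (auto simp: less_Suc_eq)
  next
    fix i assume i: "i \<in> reps p' m - Qc"
    then have "i \<notin> Pc" using OQ by (auto simp: reps_def)
    then show "i \<in> reps p (Suc m) - Pc" using i orbeq unfolding reps_def by auto
  qed
  define L' where "L' = card Qc"
  have L'0: "0 < L'" unfolding L'_def Qc_def using card_orb_pos[OF pp'] .
  have Lp'j: "(p' ^^ L') j = j" unfolding L'_def Qc_def using funpow_card_orb[OF pp'] .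
  have p'ne: "(p' ^^ t) j \<noteq> j" if "0 < t" "t < L'" for t
    using funpow_ne_card[OF pp' that[unfolded L'_def Qc_def]] .
  have p'Qc: "(p' ^^ t) j \<in> Qc" for t unfolding Qc_def orb_def by auto
  have shift: "(p ^^ Suc s) j = (p' ^^ s) j" if "1 \<le> s" "s \<le> L'" for s
    using that
  proof (induction s)
    case 0 then show ?case by simp
  next
    case (Suc s)
    show ?case
    proof (cases "s = 0")
      case True then show ?thesis by (simp add: pj pm)
    next
      case False
      then have IH: "(p ^^ Suc s) j = (p' ^^ s) j" using Suc by simp
      have ne: "(p' ^^ s) j \<noteq> j" "(p' ^^ s) j \<noteq> m"
        using p'ne[of s] False Suc.prems p'Qc[of s] mQc by auto
      have "(p ^^ Suc (Suc s)) j = p ((p' ^^ s) j)" using IH by simp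
      also have "\<dots> = (p' ^^ Suc s) j" using pother[OF ne] by simp
      finally show ?thesis .
    qed
  qed
  have cardO: "card (orb p j) = Suc L'"
  proof (rule card_orb_char[OF pp])
    show "(p ^^ Suc L') j = j" using shift[of L'] L'0 Lp'j by simp
    fix t assume t: "0 < t" "t < Suc L'"
    show "(p ^^ t) j \<noteq> j"
    proof (cases "t = 1")
      case True then show ?thesis using pj jm by simp
    next
      case False
      then obtain s where s: "t = Suc s" "1 \<le> s" "s < L'" using t by (cases t) auto
      then show ?thesis using shift[of s] p'ne[of s] by simp
    qed
  qed simp
  define T where "T = map (\<lambda>k. a ((p' ^^ k) j)) [1..<L']"
  have TA: "set T \<subseteq> A" unfolding T_def using a funpow_lt[OF p'S, of j] j by auto
  have w1: "cyc_word mul a p j = mprod mul (a j # a m # T)"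
  proof -
    have "[0..<Suc L'] = 0 # 1 # map Suc [1..<L']"
      using L'0 by (simp add: upt_conv_Cons map_Suc_upt)
    moreover have "map (\<lambda>k. a ((p ^^ k) j)) (map Suc [1..<L']) = T"
      unfolding T_def map_map comp_def by (rule map_cong[OF refl]) (simp add: shift del: funpow.simps)
    ultimately show ?thesis unfolding cyc_word_def cardO using pj by simp
  qed
  have w2: "cyc_word mul a' p' j = mprod mul (mul (a j) (a m) # T)"
  proof -
    have "[0..<L'] = 0 # [1..<L']" using L'0 by (simp add: upt_conv_Cons)
    moreover have "map (\<lambda>k. a' ((p' ^^ k) j)) [1..<L'] = T"
      unfolding T_def a'_def using p'ne by auto
    ultimately show ?thesis unfolding cyc_word_def L'_def[unfolded Qc_def, symmetric]
      by (simp add: a'_def)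
  qed
  have ajA: "a j \<in> A" "a m \<in> A" using a j by auto
  have weq: "cyc_word mul a p j = cyc_word mul a' p' j"
  proof (cases "T = []")
    case True then show ?thesis using w1 w2 by simp
  next
    case False
    then show ?thesis using w1 w2 by (simp add: mprod_Cons assoc ajA mprod_in TA)
  qed
  have a'A: "a' i \<in> A" if "i < m" for i
    unfolding a'_def using a that ajA closed by auto
  have ginv: "tau (cyc_word mul a p (p i)) = tau (cyc_word mul a p i)" if "i < Suc m" for i
    using cyc_rot[OF p that a] by simp
  have ginv': "tau (cyc_word mul a' p' (p' i)) = tau (cyc_word mul a' p' i)" if "i < m" for i
    using cyc_rot[OF p' that a'A] by simp
  have "(\<Prod>i\<in>reps p (Suc m). tau (cyc_word mul a p i))
      = tau (cyc_word mul a p j) * (\<Prod>i\<in>reps p (Suc m) - Pc. tau (cyc_word mul a p i))"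
    unfolding Pc_def using reps_prod_split[where g="\<lambda>i. tau (cyc_word mul a p i)", OF p ginv] j by simp
  also have "\<dots> = tau (cyc_word mul a' p' j) * (\<Prod>i\<in>reps p' m - Qc. tau (cyc_word mul a' p' i))"
  proof -
    have "i \<notin> Pc" if "i \<in> reps p' m - Qc" for i using that repseq[symmetric] by blast
    then show ?thesis using weq repseq cyceq by (auto intro!: prod.cong)
  qed
  also have "\<dots> = (\<Prod>i\<in>reps p' m. tau (cyc_word mul a' p' i))"
    unfolding Qc_def using reps_prod_split[where g="\<lambda>i. tau (cyc_word mul a' p' i)", OF p' ginv' j] by simp
  finally show ?thesis .
qed

end


context talg begin

lemma cyc_fixed: "p m = m \<Longrightarrow> cyc_word mul a p m = a m"
proof -
  assume pm: "p m = m"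
  have "(p ^^ k) m = m" for k by (induction k) (simp_all add: pm)
  then have "orb p m = {m}" unfolding orb_def by auto
  then show ?thesis unfolding cyc_word_def by simp
qed

lemma part1:
  assumes p: "p permutes {..<m}"
  shows "(\<Prod>i\<in>reps p (Suc m). tau (cyc_word mul a p i)) = tau (a m) * (\<Prod>i\<in>reps p m. tau (cyc_word mul a p i))"
proof -
  have pm: "p m = m" using permutes_not_in[OF p] by simp
  have "(p ^^ k) m = m" for k by (induction k) (simp_all add: pm)
  then have om: "orb p m = {m}" unfolding orb_def by auto
  have "reps p (Suc m) = insert m (reps p m)" unfolding reps_def using om by (auto simp: less_Suc_eq)
  moreover have "m \<notin> reps p m" unfolding reps_def by simp
  ultimately show ?thesis using cyc_fixed[where p=p and m=m, OF pm] finite_reps by simp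
qed

lemma remove_last:
  assumes a: "\<And>i. i < Suc m \<Longrightarrow> a i \<in> A"
  shows "S (Suc m) a = tau (a m) * S m a - (\<Sum>j<m. S m (a(j := mul (a j) (a m))))"
proof -
  define F where "F p = of_int (sign p) * (\<Prod>i\<in>reps p (Suc m). tau (cyc_word mul a p i))" for p
  define P1 where "P1 = {p. p permutes {..<Suc m} \<and> p m = m}"
  define P2 where "P2 = {p. p permutes {..<Suc m} \<and> p m \<noteq> m}"
  have fin: "finite {p. p permutes {..<Suc m}}" by (simp add: finite_permutations)
  have split: "{p. p permutes {..<Suc m}} = P1 \<union> P2" "P1 \<inter> P2 = {}" unfolding P1_def P2_def by auto
  have S1: "S (Suc m) a = sum F P1 + sum F P2"
    unfolding S_tau_reps F_def[symmetric] split(1)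
    by (rule sum.union_disjoint) (use fin split in auto)
  have P1eq: "P1 = {p. p permutes {..<m}}"
    unfolding P1_def using permutes_lessSuc permutes_subset permutes_not_in
    by (metis (no_types, opaque_lifting) lessThan_iff lessThan_subset_iff less_irrefl_nat le_SucI order_refl)
  have sum1: "sum F P1 = tau (a m) * S m a"
    unfolding P1eq S_tau_reps F_def sum_distrib_left
    by (rule sum.cong[OF refl]) (simp add: part1)
  define T where "T = {p. p permutes {..<m}} \<times> {..<m}"
  define G where "G = (\<lambda>(p', j). F (p' \<circ> Transposition.transpose j m))"
  have sum2a: "sum F P2 = sum G T"
  proof (rule sum.reindex_bij_witness[where i="\<lambda>(p', j). p' \<circ> Transposition.transpose j m"
        and j="\<lambda>p. (p \<circ> Transposition.transpose (inv p m) m, inv p m)"])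
    fix p assume "p \<in> P2"
    then have p: "p permutes {..<Suc m}" and pm: "p m \<noteq> m" unfolding P2_def by auto
    show "(case (p \<circ> Transposition.transpose (inv p m) m, inv p m) of (p', j) \<Rightarrow> p' \<circ> Transposition.transpose j m) = p"
      by (simp add: comp_assoc)
    then show "G (p \<circ> Transposition.transpose (inv p m) m, inv p m) = F p" unfolding G_def by simp
    have ip: "p (inv p m) = m" using permutes_inverses(1)[OF p] .
    have ipm: "inv p m \<noteq> m" using ip pm by auto
    have ipl: "inv p m < Suc m" using permutes_in_image[OF permutes_inv[OF p]] by simp
    have q: "p \<circ> Transposition.transpose (inv p m) m permutes {..<Suc m}"
      using p ipl by (intro permutes_compose permutes_swap_id) auto
    have "(p \<circ> Transposition.transpose (inv p m) m) m = m" using ip by simp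
    then have "p \<circ> Transposition.transpose (inv p m) m permutes {..<m}" using permutes_lessSuc[OF q] by simp
    then show "(p \<circ> Transposition.transpose (inv p m) m, inv p m) \<in> T"
      unfolding T_def using ipm ipl by auto
  next
    fix b assume "b \<in> T"
    then obtain p' j where b: "b = (p', j)" and p': "p' permutes {..<m}" and j: "j < m" unfolding T_def by auto
    have p'S: "p' permutes {..<Suc m}" using permutes_subset[OF p'] by auto
    have q: "p' \<circ> Transposition.transpose j m permutes {..<Suc m}"
      using p'S j by (intro permutes_compose permutes_swap_id) auto
    have p'm: "p' m = m" using permutes_not_in[OF p'] by simp
    have "(p' \<circ> Transposition.transpose j m) j = m" using p'm by simp
    then have iv: "inv (p' \<circ> Transposition.transpose j m) m = j" using permutes_inv_eq[OF q] by simp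
    show "(\<lambda>p. (p \<circ> Transposition.transpose (inv p m) m, inv p m)) ((\<lambda>(p', j). p' \<circ> Transposition.transpose j m) b) = b"
      unfolding b using iv by (simp add: comp_assoc)
    have "p' j < m" using permutes_in_image[OF p'] j by simp
    then have "(p' \<circ> Transposition.transpose j m) m \<noteq> m" by simp
    then show "(\<lambda>(p', j). p' \<circ> Transposition.transpose j m) b \<in> P2" unfolding b P2_def using q by simp
  qed
  have Geq: "G (p', j) = - (of_int (sign p') * (\<Prod>i\<in>reps p' m. tau (cyc_word mul (a(j := mul (a j) (a m))) p' i)))"
    if p': "p' permutes {..<m}" and j: "j < m" for p' j
  proof -
    have "sign (p' \<circ> Transposition.transpose j m) = - sign p'"
      using j by (simp add: sign_compose perm_of_permutes[OF p'] permutation_swap_id sign_swap_id)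
    then show ?thesis unfolding G_def F_def using surgery[OF p' j a] by simp
  qed
  have sum2: "sum F P2 = - (\<Sum>j<m. S m (a(j := mul (a j) (a m))))"
  proof -
    have "sum G T = (\<Sum>p'\<in>{p. p permutes {..<m}}. \<Sum>j<m. G (p', j))"
      unfolding T_def sum.cartesian_product by simp
    also have "\<dots> = (\<Sum>j<m. \<Sum>p'\<in>{p. p permutes {..<m}}. G (p', j))" by (rule sum.swap)
    also have "\<dots> = (\<Sum>j<m. - S m (a(j := mul (a j) (a m))))"
      unfolding S_tau_reps sum_negf[symmetric] by (intro sum.cong refl) (simp add: Geq)
    finally show ?thesis using sum2a by (simp add: sum_negf)
  qed
  show ?thesis using S1 sum1 sum2 by simp
qed

end


lemma reps_prod_orbits:
  assumes p: "p permutes {..<(N::nat)}"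
  shows "(\<Prod>i\<in>reps p N. g i) = (\<Prod>Oo\<in>orb p ` {..<N}. g (Min Oo))"
proof -
  have pp: "permutation p" using perm_of_permutes[OF p] .
  have inj: "inj_on (orb p) (reps p N)" unfolding reps_def by (rule inj_onI) auto
  have img: "orb p ` reps p N = orb p ` {..<N}"
  proof
    show "orb p ` {..<N} \<subseteq> orb p ` reps p N"
    proof
      fix Oo assume "Oo \<in> orb p ` {..<N}"
      then obtain i where i: "i < N" "Oo = orb p i" by auto
      define m0 where "m0 = Min (orb p i)"
      have m0O: "m0 \<in> orb p i" unfolding m0_def using Min_orb_in[OF p] .
      have om0: "orb p m0 = orb p i" using orb_same[OF pp m0O] .
      have "m0 \<in> reps p N" unfolding reps_def using om0 m0_def orb_sub[OF p i(1)] m0O by auto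
      then show "Oo \<in> orb p ` reps p N" using i om0 by auto
    qed
  qed (auto simp: reps_def)
  have "(\<Prod>Oo\<in>orb p ` {..<N}. g (Min Oo)) = (\<Prod>i\<in>reps p N. g (Min (orb p i)))"
    unfolding img[symmetric] by (rule prod.reindex[OF inj, unfolded comp_def])
  also have "\<dots> = (\<Prod>i\<in>reps p N. g i)" by (rule prod.cong) (auto simp: reps_def)
  finally show ?thesis by simp
qed

context talg begin

lemma conj_term:
  assumes p: "p permutes {..<(N::nat)}" and \<pi>: "\<pi> permutes {..<N}" and a: "\<And>j. j < N \<Longrightarrow> a j \<in> A"
  defines "q \<equiv> inv \<pi> \<circ> p \<circ> \<pi>"
  shows "(\<Prod>i\<in>reps q N. tau (cyc_word mul (a \<circ> \<pi>) q i)) = (\<Prod>i\<in>reps p N. tau (cyc_word mul a p i))"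
proof -
  have ip: "inv \<pi> permutes {..<N}" using permutes_inv[OF \<pi>] .
  have q: "q permutes {..<N}" unfolding q_def using p \<pi> ip by (intro permutes_compose)
  have pp: "permutation p" using perm_of_permutes[OF p] .
  have qk: "(q ^^ k) i = inv \<pi> ((p ^^ k) (\<pi> i))" for k i
  proof (induction k)
    case 0 then show ?case using permutes_inverses(2)[OF \<pi>] by simp
  next
    case (Suc k) then show ?case unfolding q_def using permutes_inverses(1)[OF \<pi>] by simp
  qed
  have orbq: "orb q i = inv \<pi> ` orb p (\<pi> i)" for i unfolding orb_def qk by auto
  have injip: "inj (inv \<pi>)" using permutes_inj[OF ip] .
  have cw: "cyc_word mul (a \<circ> \<pi>) q i = cyc_word mul a p (\<pi> i)" for i
  proof -
    have "card (orb q i) = card (orb p (\<pi> i))" unfolding orbq by (rule card_image[OF inj_on_subset[OF injip]]) simp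
    then show ?thesis unfolding cyc_word_def qk using permutes_inverses(1)[OF \<pi>] by simp
  qed
  define g where "g i = tau (cyc_word mul a p i)" for i
  have ginv: "g (p i) = g i" if "i < N" for i unfolding g_def using cyc_rot[OF p that a] .
  have imgorb: "orb q ` {..<N} = (\<lambda>Oo. inv \<pi> ` Oo) ` (orb p ` {..<N})"
  proof -
    have "\<pi> ` {..<N} = {..<N}" using permutes_image[OF \<pi>] .
    have "orb q ` {..<N} = (\<lambda>j. inv \<pi> ` orb p j) ` (\<pi> ` {..<N})" unfolding orbq by (simp add: image_image)
    then show ?thesis using \<open>\<pi> ` {..<N} = {..<N}\<close> by (simp add: image_image)
  qed
  have injim: "inj_on (\<lambda>Oo. inv \<pi> ` Oo) X" for X using injip by (simp add: inj_on_def inj_image_eq_iff)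
  have "(\<Prod>i\<in>reps q N. tau (cyc_word mul (a \<circ> \<pi>) q i)) = (\<Prod>Oo\<in>orb q ` {..<N}. g (\<pi> (Min Oo)))"
    unfolding reps_prod_orbits[OF q] g_def cw ..
  also have "\<dots> = (\<Prod>Oo\<in>orb p ` {..<N}. g (\<pi> (Min (inv \<pi> ` Oo))))"
    unfolding imgorb by (rule prod.reindex[OF injim, unfolded comp_def])
  also have "\<dots> = (\<Prod>Oo\<in>orb p ` {..<N}. g (Min Oo))"
  proof (rule prod.cong[OF refl])
    fix Oo assume "Oo \<in> orb p ` {..<N}"
    then obtain j where j: "j < N" "Oo = orb p j" by auto
    have fin: "finite (inv \<pi> ` Oo)" using finite_orb[OF pp] j by simp
    have ne: "inv \<pi> ` Oo \<noteq> {}" using j in_orb by auto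
    obtain y where y: "y \<in> Oo" "Min (inv \<pi> ` Oo) = inv \<pi> y" using Min_in[OF fin ne] by auto
    have "g (\<pi> (Min (inv \<pi> ` Oo))) = g y" using y permutes_inverses(1)[OF \<pi>] by simp
    also have "\<dots> = g j" using inv_orb[where g=g, OF p ginv j(1)] y j by simp
    also have "\<dots> = g (Min Oo)" using inv_orb[where g=g, OF p ginv j(1)] Min_orb_in[OF p] j by simp
    finally show "g (\<pi> (Min (inv \<pi> ` Oo))) = g (Min Oo)" .
  qed
  also have "\<dots> = (\<Prod>i\<in>reps p N. tau (cyc_word mul a p i))"
    unfolding reps_prod_orbits[OF p] g_def ..
  finally show ?thesis .
qed

lemma S_perm:
  assumes \<pi>: "\<pi> permutes {..<(N::nat)}" and a: "\<And>j. j < N \<Longrightarrow> a j \<in> A"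
  shows "S N (a \<circ> \<pi>) = S N a"
proof -
  define Tm where "Tm b p = of_int (sign p) * (\<Prod>i\<in>reps p N. tau (cyc_word mul b p i))" for b p
  have ip: "inv \<pi> permutes {..<N}" using permutes_inv[OF \<pi>] .
  have e1: "inv \<pi> \<circ> (\<pi> \<circ> q \<circ> inv \<pi>) \<circ> \<pi> = q" for q
    using permutes_inv_o[OF \<pi>] by (simp add: fun_eq_iff permutes_inverses[OF \<pi>])
  have e2: "\<pi> \<circ> (inv \<pi> \<circ> q \<circ> \<pi>) \<circ> inv \<pi> = q" for q
    by (simp add: fun_eq_iff permutes_inverses[OF \<pi>])
  have pc: "\<pi> \<circ> q \<circ> inv \<pi> permutes {..<N}" if "q permutes {..<N}" for q
    using that \<pi> ip by (simp add: permutes_compose)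
  have pc2: "inv \<pi> \<circ> q \<circ> \<pi> permutes {..<N}" if "q permutes {..<N}" for q
    using that \<pi> ip by (simp add: permutes_compose)
  have hg: "Tm a (\<pi> \<circ> q \<circ> inv \<pi>) = Tm (a \<circ> \<pi>) q" if q: "q permutes {..<N}" for q
  proof -
    have pe: "\<pi> \<circ> q \<circ> inv \<pi> permutes {..<N}" using pc[OF q] .
    have pr: "(\<Prod>i\<in>reps q N. tau (cyc_word mul (a \<circ> \<pi>) q i)) = (\<Prod>i\<in>reps (\<pi> \<circ> q \<circ> inv \<pi>) N. tau (cyc_word mul a (\<pi> \<circ> q \<circ> inv \<pi>) i))"
      using conj_term[OF pe \<pi> a] unfolding e1 .
    have "sign (\<pi> \<circ> q \<circ> inv \<pi>) = sign q"
      using perm_of_permutes[OF \<pi>] perm_of_permutes[OF ip] perm_of_permutes[OF q]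
      by (simp add: sign_compose permutation_compose sign_inverse)
    then show ?thesis unfolding Tm_def pr by simp
  qed
  have "sum (Tm (a \<circ> \<pi>)) {p. p permutes {..<N}} = sum (Tm a) {p. p permutes {..<N}}"
    by (rule sum.reindex_bij_witness[where i="\<lambda>p. inv \<pi> \<circ> p \<circ> \<pi>" and j="\<lambda>q. \<pi> \<circ> q \<circ> inv \<pi>"])
       (auto simp: e1 e2 pc pc2 hg)
  then show ?thesis unfolding S_tau_reps Tm_def .
qed

end


lemma cyc_upd_other: "permutation p \<Longrightarrow> i \<notin> orb p j \<Longrightarrow> cyc_word mul (a(j:=x)) p i = cyc_word mul a p i"
proof -
  assume pp: "permutation p" and i: "i \<notin> orb p j"
  have "(p ^^ k) i \<noteq> j" for k
  proof
    assume "(p ^^ k) i = j"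
    then have "j \<in> orb p i" unfolding orb_def by auto
    then have "orb p j = orb p i" using orb_same[OF pp] by blast
    then show False using i in_orb by auto
  qed
  then show ?thesis unfolding cyc_word_def by (intro arg_cong[where f="mprod mul"]) auto
qed

lemma cyc_upd_word: "permutation p \<Longrightarrow> cyc_word mul (a(j:=x)) p j = mprod mul (x # map (\<lambda>k. a ((p ^^ k) j)) [1..<card (orb p j)])"
proof -
  assume pp: "permutation p"
  have L0: "0 < card (orb p j)" using card_orb_pos[OF pp] .
  have eq: "map (\<lambda>k. (a(j := x)) ((p ^^ k) j)) [1..<card (orb p j)] = map (\<lambda>k. a ((p ^^ k) j)) [1..<card (orb p j)]"
    using funpow_ne_card[OF pp] by auto
  have u: "[0..<card (orb p j)] = 0 # [1..<card (orb p j)]" using L0 by (simp add: upt_conv_Cons)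
  show ?thesis unfolding cyc_word_def u by (simp only: list.map fun_upd_same funpow_0 eq)
qed

context talg begin

lemma sum_in: "finite T \<Longrightarrow> (\<And>t. t \<in> T \<Longrightarrow> b t \<in> A) \<Longrightarrow> (\<Sum>t\<in>T. b t) \<in> A"
  by (induction T rule: finite_induct) (auto simp: zero_in add_in)

lemma term_upd:
  assumes p: "p permutes {..<(N::nat)}" and j: "j < N" and a: "\<And>i. i < N \<Longrightarrow> a i \<in> A" and x: "x \<in> A"
  shows "(\<Prod>i\<in>reps p N. tau (cyc_word mul (a(j:=x)) p i))
    = tau (mprod mul (x # map (\<lambda>k. a ((p ^^ k) j)) [1..<card (orb p j)])) * (\<Prod>i\<in>reps p N - orb p j. tau (cyc_word mul a p i))"
proof -
  have pp: "permutation p" using perm_of_permutes[OF p] .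
  have ax: "\<And>i. i < N \<Longrightarrow> (a(j:=x)) i \<in> A" using a x by auto
  have g: "tau (cyc_word mul (a(j:=x)) p (p i)) = tau (cyc_word mul (a(j:=x)) p i)" if "i < N" for i
    using cyc_rot[OF p that ax] .
  show ?thesis
    using reps_prod_split[where g="\<lambda>i. tau (cyc_word mul (a(j:=x)) p i)", OF p g j]
    by (simp add: cyc_upd_word[OF pp] cyc_upd_other[OF pp])
qed

lemma S_add:
  assumes j: "j < N" and a: "\<And>i. i < N \<Longrightarrow> a i \<in> A" and b: "b \<in> A" and c: "c \<in> A"
  shows "S N (a(j := b + c)) = S N (a(j := b)) + S N (a(j := c))"
proof -
  have t: "(\<Prod>i\<in>reps p N. tau (cyc_word mul (a(j:=b+c)) p i)) =
    (\<Prod>i\<in>reps p N. tau (cyc_word mul (a(j:=b)) p i)) + (\<Prod>i\<in>reps p N. tau (cyc_word mul (a(j:=c)) p i))"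
    if p: "p permutes {..<N}" for p
  proof -
    define T where "T = map (\<lambda>k. a ((p ^^ k) j)) [1..<card (orb p j)]"
    have TA: "set T \<subseteq> A" unfolding T_def using a funpow_lt[OF p j] by auto
    have "tau (mprod mul ((b + c) # T)) = tau (mprod mul (b # T)) + tau (mprod mul (c # T))"
    proof (cases "T = []")
      case True then show ?thesis using b c by (simp add: tau_add)
    next
      case False
      then show ?thesis using b c TA by (simp add: mprod_Cons distr mprod_in tau_add closed)
    qed
    moreover note term_upd[where a=a, OF p j a b] term_upd[where a=a, OF p j a c] term_upd[where a=a, OF p j a add_in[OF b c]]
    ultimately show ?thesis unfolding T_def[symmetric] by (simp add: distrib_right)
  qed
  show ?thesis unfolding S_tau_reps by (simp add: t distrib_left sum.distrib)
qed

lemma S_zero_slot: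
  assumes j: "j < N" and a: "\<And>i. i < N \<Longrightarrow> a i \<in> A" and z: "a j = 0"
  shows "S N a = 0"
proof -
  have eq: "a(j := 0) = a" using z by auto
  have "S N a = S N a + S N a" using S_add[where a=a, OF j a zero_in zero_in] unfolding add_0 eq .
  then show ?thesis by simp
qed

lemma S_sum_slot:
  assumes fin: "finite T" and j: "j < N" and a: "\<And>i. i < N \<Longrightarrow> a i \<in> A" and b: "\<And>t. t \<in> T \<Longrightarrow> b t \<in> A"
  shows "S N (a(j := (\<Sum>t\<in>T. b t))) = (\<Sum>t\<in>T. S N (a(j := b t)))"
  using fin b
proof (induction T rule: finite_induct)
  case empty
  have "S N (a(j := 0)) = 0" by (rule S_zero_slot[where a="a(j:=0)", OF j]) (use a zero_in in auto)
  then show ?case by (simp only: sum.empty)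
next
  case (insert t T)
  have a': "\<And>i. i < N \<Longrightarrow> (a(j := b t)) i \<in> A" using a insert by auto
  have "S N (a(j := (\<Sum>t\<in>insert t T. b t))) = S N (a(j := b t + (\<Sum>t\<in>T. b t)))"
    using insert by simp
  also have "\<dots> = S N (a(j := b t)) + S N (a(j := (\<Sum>t\<in>T. b t)))"
    by (rule S_add[where a=a, OF j a]) (use insert sum_in in auto)
  also have "S N (a(j := (\<Sum>t\<in>T. b t))) = (\<Sum>t\<in>T. S N (a(j := b t)))"
    using insert.IH insert.prems by blast
  finally show ?case using insert.hyps sum.insert[of T t "\<lambda>t. S N (a(j := b t))"] by metis
qed


end

lemma sum_PiE_upd:
  assumes "k \<notin> K"
  shows "(\<Sum>\<psi>\<in>PiE (insert k K) (\<lambda>_. T). F \<psi>) = (\<Sum>(t, \<phi>)\<in>T \<times> PiE K (\<lambda>_. T). F (\<phi>(k := t)))"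
proof -
  have "(\<Sum>\<psi>\<in>PiE (insert k K) (\<lambda>_. T). F \<psi>) = (\<Sum>\<psi>\<in>(\<lambda>(y, g). g(k := y)) ` (T \<times> PiE K (\<lambda>_. T)). F \<psi>)"
    by (simp only: PiE_insert_eq)
  also have "\<dots> = (\<Sum>x\<in>T \<times> PiE K (\<lambda>_. T). F ((\<lambda>(y, g). g(k := y)) x))"
    by (rule sum.reindex[OF inj_combinator[OF assms], unfolded comp_def])
  finally show ?thesis by (simp add: case_prod_beta)
qed

context talg begin
lemma S_multi:
  assumes fin: "finite T" and b: "\<And>j t. j < N \<Longrightarrow> t \<in> T \<Longrightarrow> b j t \<in> A"
  shows "S N (\<lambda>j. \<Sum>t\<in>T. b j t) = (\<Sum>\<phi>\<in>PiE {..<N} (\<lambda>_. T). S N (\<lambda>j. b j (\<phi> j)))"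
proof -
  define a where "a j = (\<Sum>t\<in>T. b j t)" for j
  have aA: "a j \<in> A" if "j < N" for j unfolding a_def using sum_in[OF fin] b that by auto
  define c where "c k \<phi> = (\<lambda>j. if j < k then b j (\<phi> j) else a j)" for k \<phi>
  have cA: "c k \<phi> j \<in> A" if "\<phi> \<in> PiE {..<k} (\<lambda>_. T)" "j < N" for k \<phi> j
    using that aA b unfolding c_def by (auto simp: PiE_def)
  have claim: "k \<le> N \<Longrightarrow> S N a = (\<Sum>\<phi>\<in>PiE {..<k} (\<lambda>_. T). S N (c k \<phi>))" for k
  proof (induction k)
    case 0
    show ?case unfolding c_def by simp
  next
    case (Suc k)
    then have kN: "k < N" by simp
    have step: "S N (c k \<phi>) = (\<Sum>t\<in>T. S N (c (Suc k) (\<phi>(k := t))))" if \<phi>: "\<phi> \<in> PiE {..<k} (\<lambda>_. T)" for \<phi>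
    proof -
      have eq: "c k \<phi> = (c k \<phi>)(k := (\<Sum>t\<in>T. b k t))" unfolding c_def a_def by auto
      have bk: "\<And>t. t \<in> T \<Longrightarrow> b k t \<in> A" using b kN by simp
      have "S N (c k \<phi>) = (\<Sum>t\<in>T. S N ((c k \<phi>)(k := b k t)))"
        using arg_cong[where f="S N", OF eq] S_sum_slot[where a="c k \<phi>" and b="b k", OF fin kN cA[OF \<phi>] bk]
        by simp
      also have "\<dots> = (\<Sum>t\<in>T. S N (c (Suc k) (\<phi>(k := t))))"
      proof -
        have fe: "(c k \<phi>)(k := b k t) = c (Suc k) (\<phi>(k := t))" for t
          unfolding c_def by (rule ext) (simp add: less_Suc_eq)
        show ?thesis by (simp only: fe)
      qed
      finally show ?thesis .
    qed
    have "S N a = (\<Sum>\<phi>\<in>PiE {..<k} (\<lambda>_. T). S N (c k \<phi>))" using Suc.IH Suc.prems by simp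
    also have "\<dots> = (\<Sum>\<phi>\<in>PiE {..<k} (\<lambda>_. T). \<Sum>t\<in>T. S N (c (Suc k) (\<phi>(k := t))))"
      by (rule sum.cong[OF refl]) (rule step)
    also have "\<dots> = (\<Sum>(t, \<phi>)\<in>T \<times> PiE {..<k} (\<lambda>_. T). S N (c (Suc k) (\<phi>(k := t))))"
      by (subst sum.swap) (simp only: sum.cartesian_product)
    also have "\<dots> = (\<Sum>\<psi>\<in>PiE {..<Suc k} (\<lambda>_. T). S N (c (Suc k) \<psi>))"
      using sum_PiE_upd[where k=k and K="{..<k}" and T=T and F="\<lambda>\<psi>. S N (c (Suc k) \<psi>)"] by (simp add: lessThan_Suc)
    finally show ?case .
  qed
  have "S N a = (\<Sum>\<phi>\<in>PiE {..<N} (\<lambda>_. T). S N (c N \<phi>))" using claim by simp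
  also have "\<dots> = (\<Sum>\<phi>\<in>PiE {..<N} (\<lambda>_. T). S N (\<lambda>j. b j (\<phi> j)))"
    by (rule sum.cong[OF refl], rule S_cong) (simp add: c_def)
  finally show ?thesis unfolding a_def .
qed

end


lemma sum_lessThan_add: "(\<Sum>j<p+(q::nat). f j) = (\<Sum>j<p. f j) + (\<Sum>j<q. f (p + j))"
  by (induction q) (simp_all add: add.assoc)

context talg begin

lemma S_0: "S 0 a = 1"
proof -
  have "{p. p permutes ({}::nat set)} = {id}" by (auto simp: permutes_empty)
  then show ?thesis unfolding S_tau_reps reps_def by simp
qed

lemma propagate:
  assumes v: "S_vanishes A mul tau (Suc d)" and m: "Suc d \<le> m"
  shows "S_vanishes A mul tau m"
  using m
proof (induction m)
  case 0 then show ?case by simp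
next
  case (Suc m)
  show ?case
  proof (cases "Suc d = Suc m")
    case True then show ?thesis using v by simp
  next
    case False
    then have IH: "S_vanishes A mul tau m" using Suc by simp
    show ?thesis unfolding S_vanishes_def
    proof (intro allI impI)
      fix a assume a: "\<forall>i<Suc m. a i \<in> A"
      have a': "\<And>i. i < Suc m \<Longrightarrow> a i \<in> A" using a by simp
      have "S m a = 0" using IH a unfolding S_vanishes_def by simp
      moreover have "S m (a(j := mul (a j) (a m))) = 0" if "j < m" for j
        using IH a that closed unfolding S_vanishes_def by auto
      ultimately have "(\<Sum>j<m. S m (a(j := mul (a j) (a m)))) = 0" "S m a = 0"
        by (auto intro: sum.neutral)
      moreover have "S (Suc m) a = tau (a m) * S m a - (\<Sum>j<m. S m (a(j := mul (a j) (a m))))"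
        by (rule remove_last) (use a' in auto)
      ultimately show "S (Suc m) a = 0" by simp
    qed
  qed
qed

lemma S_concat:
  assumes UA: "U \<subseteq> A" and VA: "V \<subseteq> A" and orth: "\<And>x y. x \<in> U \<Longrightarrow> y \<in> V \<Longrightarrow> mul x y = 0"
    and Vc: "\<And>x y. x \<in> V \<Longrightarrow> y \<in> V \<Longrightarrow> mul x y \<in> V"
    and u: "\<And>i. i < p \<Longrightarrow> u i \<in> U"
  shows "(\<And>i. i < q \<Longrightarrow> v i \<in> V) \<Longrightarrow> S (p + q) (\<lambda>i. if i < p then u i else v (i - p)) = S p u * S q v"
proof (induction q arbitrary: v)
  case 0
  have "S p (\<lambda>i. if i < p then u i else v (i - p)) = S p u" by (rule S_cong) simp
  then show ?case by (simp add: S_0)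
next
  case (Suc q)
  define w where "w = (\<lambda>i. if i < p then u i else v (i - p))"
  have wA: "w i \<in> A" if "i < Suc (p + q)" for i
    using that u Suc.prems UA VA unfolding w_def by (auto simp: subset_iff)
  have vA: "v i \<in> A" if "i < Suc q" for i using Suc.prems VA that by auto
  have wl: "w (p + q) = v q" unfolding w_def by simp
  have t1: "S (p + q) w = S p u * S q v"
    using Suc.IH[of v] Suc.prems unfolding w_def by simp
  have t2: "S (p + q) (w(j := mul (w j) (w (p + q)))) = 0" if "j < p" for j
  proof (rule S_zero_slot[where a="w(j := mul (w j) (w (p + q)))"])
    show "j < p + q" using that by simp
    show "(w(j := mul (w j) (w (p + q)))) j = 0" using that orth u Suc.prems unfolding w_def by simp
    fix i assume "i < p + q"
    then show "(w(j := mul (w j) (w (p + q)))) i \<in> A" using wA closed that by auto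
  qed
  have t3: "S (p + q) (w(p + j := mul (w (p + j)) (w (p + q)))) = S p u * S q (v(j := mul (v j) (v q)))"
    if "j < q" for j
  proof -
    have "S (p + q) (w(p + j := mul (w (p + j)) (w (p + q)))) = S (p + q) (\<lambda>i. if i < p then u i else (v(j := mul (v j) (v q))) (i - p))"
      by (rule S_cong) (auto simp: w_def)
    also have "\<dots> = S p u * S q (v(j := mul (v j) (v q)))"
      by (rule Suc.IH) (use Suc.prems Vc that in auto)
    finally show ?thesis .
  qed
  have "S (Suc (p + q)) w = tau (w (p + q)) * S (p + q) w - (\<Sum>j<p + q. S (p + q) (w(j := mul (w j) (w (p + q)))))"
    by (rule remove_last) (use wA in auto)
  also have "\<dots> = S p u * (tau (v q) * S q v - (\<Sum>j<q. S q (v(j := mul (v j) (v q)))))"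
    unfolding sum_lessThan_add using t1 t2 t3 wl by (simp add: algebra_simps sum_distrib_left)
  also have "\<dots> = S p u * S (Suc q) v"
    using remove_last[where a=v, OF vA] by simp
  finally show ?case unfolding w_def by simp
qed

end


section \<open>Finitely supported functions and convolution\<close>

lemma sum_fun_apply: "(\<Sum>t\<in>T. f t) x = (\<Sum>t\<in>T. f t x)"
  by (induction T rule: infinite_finite_induct) auto

definition supp :: "('m \<Rightarrow> 'k::zero) \<Rightarrow> 'm set" where "supp c = {h. c h \<noteq> 0}"

definition Lf :: "('m \<Rightarrow> 'k::comm_ring_1) \<Rightarrow> ('m \<Rightarrow> 'k) \<Rightarrow> 'k" where
  "Lf \<phi> c = (\<Sum>h\<in>supp c. c h * \<phi> h)"

lemma Lf_superset: "finite H \<Longrightarrow> supp c \<subseteq> H \<Longrightarrow> Lf \<phi> c = (\<Sum>h\<in>H. c h * \<phi> h)"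
  unfolding Lf_def by (rule sum.mono_neutral_left) (auto simp: supp_def)

lemma supp_add: "supp (c + d) \<subseteq> supp c \<union> supp (d :: 'm \<Rightarrow> 'k::comm_monoid_add)"
  unfolding supp_def by auto

lemma supp_zero[simp]: "supp 0 = {}" unfolding supp_def by simp

lemma Lf_zero[simp]: "Lf \<phi> 0 = 0" unfolding Lf_def by simp

lemma Lf_add: "finite (supp c) \<Longrightarrow> finite (supp d) \<Longrightarrow> Lf \<phi> (c + d) = Lf \<phi> c + Lf \<phi> d"
proof -
  assume fc: "finite (supp c)" and fd: "finite (supp d)"
  let ?H = "supp c \<union> supp d"
  have "Lf \<phi> (c + d) = (\<Sum>h\<in>?H. (c + d) h * \<phi> h)" using supp_add[of c d] fc fd by (intro Lf_superset) auto
  moreover have "Lf \<phi> c = (\<Sum>h\<in>?H. c h * \<phi> h)" using fc fd by (intro Lf_superset) auto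
  moreover have "Lf \<phi> d = (\<Sum>h\<in>?H. d h * \<phi> h)" using fc fd by (intro Lf_superset) auto
  ultimately show ?thesis by (simp add: distrib_right sum.distrib)
qed

lemma finite_supp_sum: "(\<And>t. t \<in> T \<Longrightarrow> finite (supp (c t))) \<Longrightarrow> finite (supp (\<Sum>t\<in>T. c t))"
proof (induction T rule: infinite_finite_induct)
  case (insert t T)
  have "finite (supp (c t + (\<Sum>t\<in>T. c t)))"
    using supp_add[of "c t" "\<Sum>t\<in>T. c t"] insert by (meson finite_Un finite_subset insertCI)
  then show ?case by (simp only: sum.insert[OF insert.hyps])
qed auto

lemma Lf_sum: "(\<And>t. t \<in> T \<Longrightarrow> finite (supp (c t))) \<Longrightarrow> Lf \<phi> (\<Sum>t\<in>T. c t) = (\<Sum>t\<in>T. Lf \<phi> (c t))"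
proof (induction T rule: infinite_finite_induct)
  case (insert t T)
  have "Lf \<phi> (c t + (\<Sum>t\<in>T. c t)) = Lf \<phi> (c t) + Lf \<phi> (\<Sum>t\<in>T. c t)"
    using finite_supp_sum[of T c] insert.prems by (intro Lf_add) auto
  then show ?case using insert by (simp only: sum.insert[OF insert.hyps]) simp
qed auto

lemma Lf_ext:
  assumes "finite (supp c)" "finite (supp d)" "\<And>\<phi>. Lf \<phi> c = Lf \<phi> d"
  shows "c = d"
proof
  fix h
  have e: "Lf (\<lambda>x. if x = h then 1 else 0) e = e h" if "finite (supp e)" for e :: "'a \<Rightarrow> 'b"
  proof -
    have "Lf (\<lambda>x. if x = h then 1 else 0) e = (\<Sum>x\<in>insert h (supp e). e x * (if x = h then 1 else 0))"
      using that by (intro Lf_superset) auto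
    also have "\<dots> = e h" using that by (simp add: if_distrib sum.delta cong: if_cong)
    finally show ?thesis .
  qed
  show "c h = d h" using e[OF assms(1)] e[OF assms(2)] assms(3) by metis
qed

lemma supp_conv: "finite (supp a) \<Longrightarrow> finite (supp b) \<Longrightarrow> supp (conv cmp a b) \<subseteq> (\<lambda>(f, g). cmp f g) ` (supp a \<times> supp b)"
proof
  fix h assume fa: "finite (supp a)" and fb: "finite (supp b)" and h: "h \<in> supp (conv cmp a b)"
  show "h \<in> (\<lambda>(f, g). cmp f g) ` (supp a \<times> supp b)"
  proof (rule ccontr)
    assume nh: "h \<notin> (\<lambda>(f, g). cmp f g) ` (supp a \<times> supp b)"
    have "conv cmp a b h = 0" unfolding conv_def
      using nh by (intro sum.neutral ballI) (auto simp: supp_def)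
    then show False using h unfolding supp_def by simp
  qed
qed

lemma finite_supp_conv: "finite (supp a) \<Longrightarrow> finite (supp b) \<Longrightarrow> finite (supp (conv cmp a b))"
  by (rule finite_subset[OF supp_conv]) auto

lemma L_conv:
  assumes fa: "finite (supp a)" and fb: "finite (supp b)"
  shows "Lf \<phi> (conv cmp a b) = (\<Sum>f\<in>supp a. \<Sum>g\<in>supp b. a f * b g * \<phi> (cmp f g))"
proof -
  define H where "H = (\<lambda>(f, g). cmp f g) ` (supp a \<times> supp b)"
  have fH: "finite H" unfolding H_def using fa fb by simp
  have cv: "conv cmp a b h = (\<Sum>f\<in>supp a. \<Sum>g\<in>supp b. if cmp f g = h then a f * b g else 0)" for h
    unfolding conv_def supp_def ..
  have "Lf \<phi> (conv cmp a b) = (\<Sum>h\<in>H. conv cmp a b h * \<phi> h)"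
    using supp_conv[OF fa fb] fH unfolding H_def by (intro Lf_superset) auto
  also have "\<dots> = (\<Sum>h\<in>H. \<Sum>f\<in>supp a. \<Sum>g\<in>supp b. if cmp f g = h then a f * b g * \<phi> h else 0)"
    unfolding cv sum_distrib_right by (intro sum.cong refl) simp
  also have "\<dots> = (\<Sum>f\<in>supp a. \<Sum>g\<in>supp b. \<Sum>h\<in>H. if cmp f g = h then a f * b g * \<phi> h else 0)"
    by (subst sum.swap) (simp add: sum.swap[of _ H])
  also have "\<dots> = (\<Sum>f\<in>supp a. \<Sum>g\<in>supp b. a f * b g * \<phi> (cmp f g))"
  proof (intro sum.cong refl)
    fix f g assume "f \<in> supp a" "g \<in> supp b"
    then have "cmp f g \<in> H" unfolding H_def by auto
    then show "(\<Sum>h\<in>H. if cmp f g = h then a f * b g * \<phi> h else 0) = a f * b g * \<phi> (cmp f g)"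
      using fH by (simp add: sum.delta)
  qed
  finally show ?thesis .
qed


lemma L_conv':
  assumes fa: "finite (supp a)" and fb: "finite (supp b)" and F: "finite F" "supp a \<subseteq> F" and G: "finite G" "supp b \<subseteq> G"
  shows "Lf \<phi> (conv cmp a b) = (\<Sum>f\<in>F. \<Sum>g\<in>G. a f * b g * \<phi> (cmp f g))"
proof -
  have "Lf \<phi> (conv cmp a b) = (\<Sum>f\<in>supp a. \<Sum>g\<in>supp b. a f * b g * \<phi> (cmp f g))" by (rule L_conv[OF fa fb])
  also have "\<dots> = (\<Sum>f\<in>supp a. \<Sum>g\<in>G. a f * b g * \<phi> (cmp f g))"
    by (intro sum.cong refl sum.mono_neutral_left G) (auto simp: supp_def)
  also have "\<dots> = (\<Sum>f\<in>F. \<Sum>g\<in>G. a f * b g * \<phi> (cmp f g))"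
    by (intro sum.mono_neutral_left F) (auto simp: supp_def)
  finally show ?thesis .
qed

lemma conv_add_left:
  assumes "finite (supp a)" "finite (supp b)" "finite (supp c)"
  shows "conv cmp (a + b) c = conv cmp a c + conv cmp b c"
proof (rule Lf_ext)
  have fab: "finite (supp (a + b))" using supp_add[of a b] assms by (meson finite_Un finite_subset)
  show "finite (supp (conv cmp (a + b) c))" using finite_supp_conv fab assms by blast
  show "finite (supp (conv cmp a c + conv cmp b c))"
    using supp_add[of "conv cmp a c" "conv cmp b c"] finite_supp_conv assms by (meson finite_Un finite_subset)
  fix \<phi>
  let ?F = "supp a \<union> supp b"
  have "Lf \<phi> (conv cmp (a + b) c) = (\<Sum>f\<in>?F. \<Sum>g\<in>supp c. (a + b) f * c g * \<phi> (cmp f g))"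
    using assms fab supp_add[of a b] by (intro L_conv') auto
  moreover have "Lf \<phi> (conv cmp a c) = (\<Sum>f\<in>?F. \<Sum>g\<in>supp c. a f * c g * \<phi> (cmp f g))"
    using assms by (intro L_conv') auto
  moreover have "Lf \<phi> (conv cmp b c) = (\<Sum>f\<in>?F. \<Sum>g\<in>supp c. b f * c g * \<phi> (cmp f g))"
    using assms by (intro L_conv') auto
  moreover have "Lf \<phi> (conv cmp a c + conv cmp b c) = Lf \<phi> (conv cmp a c) + Lf \<phi> (conv cmp b c)"
    using assms finite_supp_conv by (intro Lf_add) auto
  ultimately show "Lf \<phi> (conv cmp (a + b) c) = Lf \<phi> (conv cmp a c + conv cmp b c)"
    by (simp add: distrib_right sum.distrib)
qed

lemma conv_add_right:
  assumes "finite (supp a)" "finite (supp b)" "finite (supp c)"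
  shows "conv cmp c (a + b) = conv cmp c a + conv cmp c b"
proof (rule Lf_ext)
  have fab: "finite (supp (a + b))" using supp_add[of a b] assms by (meson finite_Un finite_subset)
  show "finite (supp (conv cmp c (a + b)))" using finite_supp_conv fab assms by blast
  show "finite (supp (conv cmp c a + conv cmp c b))"
    using supp_add[of "conv cmp c a" "conv cmp c b"] finite_supp_conv assms by (meson finite_Un finite_subset)
  fix \<phi>
  let ?F = "supp a \<union> supp b"
  have "Lf \<phi> (conv cmp c (a + b)) = (\<Sum>g\<in>supp c. \<Sum>f\<in>?F. c g * (a + b) f * \<phi> (cmp g f))"
    using assms fab supp_add[of a b] by (intro L_conv') auto
  moreover have "Lf \<phi> (conv cmp c a) = (\<Sum>g\<in>supp c. \<Sum>f\<in>?F. c g * a f * \<phi> (cmp g f))"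
    using assms by (intro L_conv') auto
  moreover have "Lf \<phi> (conv cmp c b) = (\<Sum>g\<in>supp c. \<Sum>f\<in>?F. c g * b f * \<phi> (cmp g f))"
    using assms by (intro L_conv') auto
  moreover have "Lf \<phi> (conv cmp c a + conv cmp c b) = Lf \<phi> (conv cmp c a) + Lf \<phi> (conv cmp c b)"
    using assms finite_supp_conv by (intro Lf_add) auto
  ultimately show "Lf \<phi> (conv cmp c (a + b)) = Lf \<phi> (conv cmp c a + conv cmp c b)"
    by (simp add: distrib_left distrib_right sum.distrib)
qed

lemma conv_zero_left[simp]: "conv cmp 0 c = 0"
  unfolding conv_def by (simp add: zero_fun_def)

lemma conv_zero_right[simp]: "conv cmp c 0 = 0"
  unfolding conv_def by (simp add: zero_fun_def)

lemma conv_sum_left: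
  assumes "\<And>t. t \<in> T \<Longrightarrow> finite (supp (a t))" "finite (supp c)"
  shows "conv cmp (\<Sum>t\<in>T. a t) c = (\<Sum>t\<in>T. conv cmp (a t) c)"
  using assms
proof (induction T rule: infinite_finite_induct)
  case (insert t T)
  have "conv cmp (a t + (\<Sum>t\<in>T. a t)) c = conv cmp (a t) c + conv cmp (\<Sum>t\<in>T. a t) c"
    using insert finite_supp_sum[of T a] by (intro conv_add_left) auto
  then show ?case using insert by (simp only: sum.insert[OF insert.hyps]) simp
qed auto

lemma conv_sum_right:
  assumes "\<And>t. t \<in> T \<Longrightarrow> finite (supp (a t))" "finite (supp c)"
  shows "conv cmp c (\<Sum>t\<in>T. a t) = (\<Sum>t\<in>T. conv cmp c (a t))"
  using assms
proof (induction T rule: infinite_finite_induct)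
  case (insert t T)
  have "conv cmp c (a t + (\<Sum>t\<in>T. a t)) = conv cmp c (a t) + conv cmp c (\<Sum>t\<in>T. a t)"
    using insert finite_supp_sum[of T a] by (intro conv_add_right) auto
  then show ?case using insert by (simp only: sum.insert[OF insert.hyps]) simp
qed auto

lemma conv_assoc:
  assumes fa: "finite (supp a)" and fb: "finite (supp b)" and fc: "finite (supp c)"
    and as: "\<And>f g h. f \<in> supp a \<Longrightarrow> g \<in> supp b \<Longrightarrow> h \<in> supp c \<Longrightarrow> cmp f (cmp g h) = cmp (cmp f g) h"
  shows "conv cmp (conv cmp a b) c = conv cmp a (conv cmp b c)"
proof (rule Lf_ext)
  have fab: "finite (supp (conv cmp a b))" and fbc: "finite (supp (conv cmp b c))"
    using finite_supp_conv fa fb fc by blast+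
  show "finite (supp (conv cmp (conv cmp a b) c))" "finite (supp (conv cmp a (conv cmp b c)))"
    using finite_supp_conv fab fbc fa fc by blast+
  fix \<phi>
  have "Lf \<phi> (conv cmp (conv cmp a b) c) = (\<Sum>e\<in>supp (conv cmp a b). \<Sum>h\<in>supp c. conv cmp a b e * c h * \<phi> (cmp e h))"
    by (rule L_conv[OF fab fc])
  also have "\<dots> = (\<Sum>h\<in>supp c. c h * (\<Sum>e\<in>supp (conv cmp a b). conv cmp a b e * \<phi> (cmp e h)))"
    by (subst sum.swap) (simp add: sum_distrib_left mult_ac)
  also have "\<dots> = (\<Sum>h\<in>supp c. c h * Lf (\<lambda>e. \<phi> (cmp e h)) (conv cmp a b))"
    unfolding Lf_def ..
  also have "\<dots> = (\<Sum>h\<in>supp c. c h * (\<Sum>f\<in>supp a. \<Sum>g\<in>supp b. a f * b g * \<phi> (cmp (cmp f g) h)))"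
    by (simp add: L_conv[OF fa fb])
  also have "\<dots> = (\<Sum>f\<in>supp a. a f * (\<Sum>g\<in>supp b. \<Sum>h\<in>supp c. b g * c h * \<phi> (cmp f (cmp g h))))"
  proof -
    have "(\<Sum>h\<in>supp c. c h * (\<Sum>f\<in>supp a. \<Sum>g\<in>supp b. a f * b g * \<phi> (cmp (cmp f g) h)))
        = (\<Sum>h\<in>supp c. \<Sum>f\<in>supp a. \<Sum>g\<in>supp b. a f * (b g * c h * \<phi> (cmp f (cmp g h))))"
      by (intro sum.cong refl) (simp add: sum_distrib_left as mult_ac)
    also have "\<dots> = (\<Sum>f\<in>supp a. \<Sum>g\<in>supp b. \<Sum>h\<in>supp c. a f * (b g * c h * \<phi> (cmp f (cmp g h))))"
      by (subst sum.swap) (simp add: sum.swap[of _ "supp c"])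
    finally show ?thesis by (simp add: sum_distrib_left)
  qed
  also have "\<dots> = (\<Sum>f\<in>supp a. a f * Lf (\<lambda>e. \<phi> (cmp f e)) (conv cmp b c))"
    by (simp add: L_conv[OF fb fc])
  also have "\<dots> = (\<Sum>f\<in>supp a. \<Sum>e\<in>supp (conv cmp b c). a f * conv cmp b c e * \<phi> (cmp f e))"
    unfolding Lf_def by (simp add: sum_distrib_left mult_ac)
  also have "\<dots> = Lf \<phi> (conv cmp a (conv cmp b c))"
    by (rule L_conv[OF fa fbc, symmetric])
  finally show "Lf \<phi> (conv cmp (conv cmp a b) c) = Lf \<phi> (conv cmp a (conv cmp b c))" .
qed


section \<open>The category\<close>

locale catl =
  fixes n :: nat and Hom :: "nat \<Rightarrow> nat \<Rightarrow> 'm set" and cmp :: "'m \<Rightarrow> 'm \<Rightarrow> 'm" and idm :: "nat \<Rightarrow> 'm"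
    and \<alpha> :: "nat \<times> 'm \<Rightarrow> 'k::field"
  assumes cat: "is_category n Hom cmp idm" and lf: "loop_function n Hom cmp \<alpha>"
begin

lemma comp_in: "i < n \<Longrightarrow> j < n \<Longrightarrow> l < n \<Longrightarrow> f \<in> Hom i j \<Longrightarrow> g \<in> Hom j l \<Longrightarrow> cmp g f \<in> Hom i l"
  using cat[unfolded is_category_def, THEN conjunct2, THEN conjunct1] by blast

lemma comp_assoc: "i < n \<Longrightarrow> j < n \<Longrightarrow> l < n \<Longrightarrow> m < n \<Longrightarrow> f \<in> Hom i j \<Longrightarrow> g \<in> Hom j l \<Longrightarrow> h \<in> Hom l m
   \<Longrightarrow> cmp h (cmp g f) = cmp (cmp h g) f"
  using cat[unfolded is_category_def, THEN conjunct2, THEN conjunct2, THEN conjunct1] by blast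

lemma lin_iff: "c \<in> lin S \<longleftrightarrow> finite (supp c) \<and> supp c \<subseteq> S"
  unfolding lin_def supp_def by simp

lemma lin_zero: "0 \<in> lin S" unfolding lin_iff by simp

lemma lin_add: "a \<in> lin S \<Longrightarrow> b \<in> lin S \<Longrightarrow> a + b \<in> lin (S::'m set)" for a b :: "'m \<Rightarrow> 'k"
  unfolding lin_iff using supp_add[of a b] by (meson finite_Un finite_subset le_sup_iff subset_trans)

lemma lin_sum: "(\<And>t. t \<in> T \<Longrightarrow> a t \<in> lin S) \<Longrightarrow> (\<Sum>t\<in>T. a t) \<in> lin (S::'m set)" for a :: "'t \<Rightarrow> 'm \<Rightarrow> 'k"
proof (induction T rule: infinite_finite_induct)
  case (insert t T)
  have "a t + (\<Sum>t\<in>T. a t) \<in> lin S" using insert by (intro lin_add) auto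
  then show ?case by (simp only: sum.insert[OF insert.hyps])
qed (auto simp: lin_zero)

lemma conv_lin:
  assumes i: "i < n" and j: "j < n" and l: "l < n" and a: "a \<in> lin (Hom l i)" and b: "b \<in> lin (Hom j l)"
  shows "conv cmp a b \<in> lin (Hom j i)"
proof -
  have fa: "finite (supp a)" and fb: "finite (supp b)" using a b unfolding lin_iff by auto
  have "(\<lambda>(f, g). cmp f g) ` (supp a \<times> supp b) \<subseteq> Hom j i"
    using a b comp_in[OF j l i] unfolding lin_iff by auto
  then have "supp (conv cmp a b) \<subseteq> Hom j i" using supp_conv[OF fa fb, of cmp] by blast
  then show ?thesis unfolding lin_iff using finite_supp_conv[OF fa fb] by blast
qed

lemma conv_assoc_lin:
  assumes i: "i < n" and j: "j < n" and l: "l < n" and m: "m < n"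
    and a: "a \<in> lin (Hom l i)" and b: "b \<in> lin (Hom m l)" and c: "c \<in> lin (Hom j m)"
  shows "conv cmp (conv cmp a b) c = conv cmp a (conv cmp b c)"
  using a b c unfolding lin_iff
  by (intro conv_assoc) (auto intro!: comp_assoc[OF j m l i])

lemma alpha_Lf: "alpha_lin \<alpha> i c = Lf (\<lambda>b. \<alpha> (i, b)) c"
  unfolding alpha_lin_def Lf_def supp_def ..

lemma alpha_add: "finite (supp a) \<Longrightarrow> finite (supp b) \<Longrightarrow> alpha_lin \<alpha> i (a + b) = alpha_lin \<alpha> i a + alpha_lin \<alpha> i b"
  unfolding alpha_Lf by (rule Lf_add)

lemma alpha_sum: "(\<And>t. t \<in> T \<Longrightarrow> finite (supp (c t))) \<Longrightarrow> alpha_lin \<alpha> i (\<Sum>t\<in>T. c t) = (\<Sum>t\<in>T. alpha_lin \<alpha> i (c t))"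
  unfolding alpha_Lf by (rule Lf_sum)

lemma alpha_zero[simp]: "alpha_lin \<alpha> i 0 = 0"
  unfolding alpha_Lf by simp

lemma loop_inv: "i < n \<Longrightarrow> l < n \<Longrightarrow> g \<in> Hom i l \<Longrightarrow> f \<in> Hom l i \<Longrightarrow> \<alpha> (i, cmp f g) = \<alpha> (l, cmp g f)"
proof -
  assume i: "i < n" and l: "l < n" and g: "g \<in> Hom i l" and f: "f \<in> Hom l i"
  have "((i, cmp f g), (l, cmp g f)) \<in> loop_rel n Hom cmp"
    unfolding loop_rel_def using i l g f by blast
  then have "((i, cmp f g), (l, cmp g f)) \<in> loop_equiv n Hom cmp"
    unfolding loop_equiv_def by blast
  then show ?thesis using lf unfolding loop_function_def by blast
qed

lemma trace_lin:
  assumes i: "i < n" and l: "l < n" and a: "a \<in> lin (Hom l i)" and b: "b \<in> lin (Hom i l)"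
  shows "alpha_lin \<alpha> i (conv cmp a b) = alpha_lin \<alpha> l (conv cmp b a)"
proof -
  have fa: "finite (supp a)" and fb: "finite (supp b)" using a b unfolding lin_iff by auto
  have "alpha_lin \<alpha> i (conv cmp a b) = (\<Sum>f\<in>supp a. \<Sum>g\<in>supp b. a f * b g * \<alpha> (i, cmp f g))"
    unfolding alpha_Lf by (rule L_conv[OF fa fb])
  also have "\<dots> = (\<Sum>f\<in>supp a. \<Sum>g\<in>supp b. b g * a f * \<alpha> (l, cmp g f))"
  proof (intro sum.cong refl)
    fix f g assume f: "f \<in> supp a" and g: "g \<in> supp b"
    have "\<alpha> (i, cmp f g) = \<alpha> (l, cmp g f)"
      using f g a b unfolding lin_iff by (intro loop_inv[OF i l]) auto
    then show "a f * b g * \<alpha> (i, cmp f g) = b g * a f * \<alpha> (l, cmp g f)" by (simp add: mult_ac)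
  qed
  also have "\<dots> = alpha_lin \<alpha> l (conv cmp b a)"
    unfolding alpha_Lf L_conv[OF fb fa] by (rule sum.swap)
  finally show ?thesis .
qed

section \<open>Matrices\<close>

lemma mm_entry: "i < n \<Longrightarrow> j < n \<Longrightarrow> mat_mult n cmp x y i j = (\<Sum>l<n. conv cmp (x i l) (y l j))"
  unfolding mat_mult_def by (rule ext) (simp add: sum_fun_apply)

lemma mm_out: "\<not> (i < n \<and> j < n) \<Longrightarrow> mat_mult n cmp x y i j = 0"
  unfolding mat_mult_def by (auto simp: zero_fun_def)

lemma mat_alg_iff: "x \<in> mat_alg n Hom \<longleftrightarrow> (\<forall>i<n. \<forall>j<n. x i j \<in> lin (Hom j i)) \<and> (\<forall>i j. (n \<le> i \<or> n \<le> j) \<longrightarrow> x i j = 0)"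
  unfolding mat_alg_def by (simp add: zero_fun_def)

lemma mat_fs: "x \<in> mat_alg n Hom \<Longrightarrow> finite (supp (x i j))" for x y :: "nat \<Rightarrow> nat \<Rightarrow> 'm \<Rightarrow> 'k"
  unfolding mat_alg_iff lin_iff by (cases "i < n \<and> j < n") auto

lemma mm_in: "x \<in> mat_alg n Hom \<Longrightarrow> y \<in> mat_alg n Hom \<Longrightarrow> mat_mult n cmp x y \<in> mat_alg n Hom" for x y :: "nat \<Rightarrow> nat \<Rightarrow> 'm \<Rightarrow> 'k"
proof -
  assume x: "x \<in> mat_alg n Hom" and y: "y \<in> mat_alg n Hom"
  have "mat_mult n cmp x y i j \<in> lin (Hom j i)" if i: "i < n" and j: "j < n" for i j
    unfolding mm_entry[OF i j]
  proof (rule lin_sum)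
    fix l assume "l \<in> {..<n}"
    then have l: "l < n" by simp
    show "conv cmp (x i l) (y l j) \<in> lin (Hom j i)"
      using x y i j l unfolding mat_alg_iff by (intro conv_lin[OF i j l]) auto
  qed
  then show ?thesis unfolding mat_alg_iff by (auto simp: mm_out)
qed

lemma ma_zero: "(0 :: nat \<Rightarrow> nat \<Rightarrow> 'm \<Rightarrow> 'k) \<in> mat_alg n Hom" unfolding mat_alg_iff by (simp add: lin_zero)

lemma ma_add: "x \<in> mat_alg n Hom \<Longrightarrow> y \<in> mat_alg n Hom \<Longrightarrow> x + y \<in> mat_alg n Hom" for x y :: "nat \<Rightarrow> nat \<Rightarrow> 'm \<Rightarrow> 'k"
  unfolding mat_alg_iff by (auto simp: lin_add)

lemma mm_assoc:
  fixes x y z :: "nat \<Rightarrow> nat \<Rightarrow> 'm \<Rightarrow> 'k"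
  assumes x: "x \<in> mat_alg n Hom" and y: "y \<in> mat_alg n Hom" and z: "z \<in> mat_alg n Hom"
  shows "mat_mult n cmp (mat_mult n cmp x y) z = mat_mult n cmp x (mat_mult n cmp y z)"
proof (rule ext, rule ext)
  fix i j
  show "mat_mult n cmp (mat_mult n cmp x y) z i j = mat_mult n cmp x (mat_mult n cmp y z) i j"
  proof (cases "i < n \<and> j < n")
    case False then show ?thesis by (simp add: mm_out)
  next
    case True
    then have i: "i < n" and j: "j < n" by auto
    have xl: "x i l \<in> lin (Hom l i)" if "l < n" for l using x i that unfolding mat_alg_iff by auto
    have yl: "y l m \<in> lin (Hom m l)" if "l < n" "m < n" for l m using y that unfolding mat_alg_iff by auto
    have zl: "z m j \<in> lin (Hom j m)" if "m < n" for m using z j that unfolding mat_alg_iff by auto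
    have fs: "finite (supp (conv cmp a b))" if "finite (supp a)" "finite (supp b)" for a b
      using finite_supp_conv that by blast
    have "mat_mult n cmp (mat_mult n cmp x y) z i j = (\<Sum>m<n. conv cmp (\<Sum>l<n. conv cmp (x i l) (y l m)) (z m j))"
      using i j by (simp add: mm_entry)
    also have "\<dots> = (\<Sum>m<n. \<Sum>l<n. conv cmp (conv cmp (x i l) (y l m)) (z m j))"
      by (intro sum.cong refl conv_sum_left) (auto intro: fs mat_fs x y z)
    also have "\<dots> = (\<Sum>m<n. \<Sum>l<n. conv cmp (x i l) (conv cmp (y l m) (z m j)))"
    proof -
      have eqa: "conv cmp (conv cmp (x i l) (y l m)) (z m j) = conv cmp (x i l) (conv cmp (y l m) (z m j))"
        if m: "m < n" and l: "l < n" for m l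
        by (rule conv_assoc_lin[OF i j l m xl[OF l] yl[OF l m] zl[OF m]])
      show ?thesis by (intro sum.cong refl) (simp add: eqa)
    qed
    also have "\<dots> = (\<Sum>l<n. conv cmp (x i l) (\<Sum>m<n. conv cmp (y l m) (z m j)))"
      by (subst sum.swap) (intro sum.cong refl conv_sum_right[symmetric], auto intro: fs mat_fs x y z)
    also have "\<dots> = mat_mult n cmp x (mat_mult n cmp y z) i j"
      using i j by (simp add: mm_entry)
    finally show ?thesis .
  qed
qed

lemma mm_distl:
  fixes x y z :: "nat \<Rightarrow> nat \<Rightarrow> 'm \<Rightarrow> 'k"
  assumes x: "x \<in> mat_alg n Hom" and y: "y \<in> mat_alg n Hom" and z: "z \<in> mat_alg n Hom"
  shows "mat_mult n cmp x (y + z) = mat_mult n cmp x y + mat_mult n cmp x z"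
proof (rule ext, rule ext)
  fix i j
  show "mat_mult n cmp x (y + z) i j = (mat_mult n cmp x y + mat_mult n cmp x z) i j"
  proof (cases "i < n \<and> j < n")
    case False then show ?thesis by (simp add: mm_out zero_fun_def)
  next
    case True
    then have i: "i < n" and j: "j < n" by auto
    have e1: "(y + z) l j = y l j + z l j" for l by simp
    have e2: "(mat_mult n cmp x y + mat_mult n cmp x z) i j = mat_mult n cmp x y i j + mat_mult n cmp x z i j" by simp
    show ?thesis unfolding e2 mm_entry[OF i j] e1 sum.distrib[symmetric]
      by (intro sum.cong refl conv_add_right) (use x y z mat_fs in auto)
  qed
qed

lemma mm_distr:
  fixes x y z :: "nat \<Rightarrow> nat \<Rightarrow> 'm \<Rightarrow> 'k"
  assumes x: "x \<in> mat_alg n Hom" and y: "y \<in> mat_alg n Hom" and z: "z \<in> mat_alg n Hom"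
  shows "mat_mult n cmp (y + z) x = mat_mult n cmp y x + mat_mult n cmp z x"
proof (rule ext, rule ext)
  fix i j
  show "mat_mult n cmp (y + z) x i j = (mat_mult n cmp y x + mat_mult n cmp z x) i j"
  proof (cases "i < n \<and> j < n")
    case False then show ?thesis by (simp add: mm_out zero_fun_def)
  next
    case True
    then have i: "i < n" and j: "j < n" by auto
    have e1: "(y + z) i l = y i l + z i l" for l by simp
    have e2: "(mat_mult n cmp y x + mat_mult n cmp z x) i j = mat_mult n cmp y x i j + mat_mult n cmp z x i j" by simp
    show ?thesis unfolding e2 mm_entry[OF i j] e1 sum.distrib[symmetric]
      by (intro sum.cong refl conv_add_left) (use x y z mat_fs in auto)
  qed
qed

lemma mt_add: "x \<in> mat_alg n Hom \<Longrightarrow> y \<in> mat_alg n Hom \<Longrightarrow> mat_trace n \<alpha> (x + y) = mat_trace n \<alpha> x + mat_trace n \<alpha> y" for x y :: "nat \<Rightarrow> nat \<Rightarrow> 'm \<Rightarrow> 'k"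
proof -
  assume x: "x \<in> mat_alg n Hom" and y: "y \<in> mat_alg n Hom"
  have e1: "(x + y) i i = x i i + y i i" for i by simp
  show ?thesis unfolding mat_trace_def e1 sum.distrib[symmetric]
    by (intro sum.cong refl alpha_add) (use x y mat_fs in auto)
qed

lemma mt_comm:
  fixes x y z :: "nat \<Rightarrow> nat \<Rightarrow> 'm \<Rightarrow> 'k"
  assumes x: "x \<in> mat_alg n Hom" and y: "y \<in> mat_alg n Hom"
  shows "mat_trace n \<alpha> (mat_mult n cmp x y) = mat_trace n \<alpha> (mat_mult n cmp y x)"
proof -
  have fs: "finite (supp (conv cmp a b))" if "finite (supp a)" "finite (supp b)" for a b
    using finite_supp_conv that by blast
  have "mat_trace n \<alpha> (mat_mult n cmp x y) = (\<Sum>i<n. \<Sum>l<n. alpha_lin \<alpha> i (conv cmp (x i l) (y l i)))"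
    unfolding mat_trace_def by (intro sum.cong refl) (simp add: mm_entry alpha_sum fs mat_fs x y)
  also have "\<dots> = (\<Sum>i<n. \<Sum>l<n. alpha_lin \<alpha> l (conv cmp (y l i) (x i l)))"
    using x y unfolding mat_alg_iff by (intro sum.cong refl trace_lin) auto
  also have "\<dots> = mat_trace n \<alpha> (mat_mult n cmp y x)"
    unfolding mat_trace_def by (subst sum.swap) (intro sum.cong refl, simp add: mm_entry alpha_sum fs mat_fs x y)
  finally show ?thesis .
qed

lemma talg_mat: "talg (mat_alg n Hom) (mat_mult n cmp) (mat_trace n \<alpha>)"
  by unfold_locales (auto simp: mm_in mm_assoc mt_comm ma_zero ma_add mm_distl mm_distr mt_add)

lemma talg_obj: "x < n \<Longrightarrow> talg (lin (Hom x x)) (conv cmp) (alpha_lin \<alpha> x)"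
proof -
  assume x: "x < n"
  show ?thesis
  proof (unfold_locales)
    fix a b c :: "'m \<Rightarrow> 'k" assume a: "a \<in> lin (Hom x x)" and b: "b \<in> lin (Hom x x)" and c: "c \<in> lin (Hom x x)"
    show "conv cmp a b \<in> lin (Hom x x)" by (rule conv_lin[OF x x x a b])
    show "conv cmp (conv cmp a b) c = conv cmp a (conv cmp b c)" by (rule conv_assoc_lin[OF x x x x a b c])
    show "alpha_lin \<alpha> x (conv cmp a b) = alpha_lin \<alpha> x (conv cmp b a)" by (rule trace_lin[OF x x a b])
    show "a + b \<in> lin (Hom x x)" by (rule lin_add[OF a b])
    show "conv cmp a (b + c) = conv cmp a b + conv cmp a c"
      using a b c unfolding lin_iff by (intro conv_add_right) auto
    show "conv cmp (b + c) a = conv cmp b a + conv cmp c a"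
      using a b c unfolding lin_iff by (intro conv_add_left) auto
    show "alpha_lin \<alpha> x (a + b) = alpha_lin \<alpha> x a + alpha_lin \<alpha> x b"
      using a b unfolding lin_iff by (intro alpha_add) auto
  next
    show "0 \<in> lin (Hom x x)" by (rule lin_zero)
  qed
qed

end


context catl begin

interpretation M: talg "mat_alg n Hom" "mat_mult n cmp" "mat_trace n \<alpha>" by (rule talg_mat)

definition rowm :: "nat \<Rightarrow> (nat \<Rightarrow> nat \<Rightarrow> 'm \<Rightarrow> 'k) \<Rightarrow> bool" where
  "rowm x M \<longleftrightarrow> M \<in> mat_alg n Hom \<and> (\<forall>i j. i \<noteq> x \<longrightarrow> M i j = 0)"

lemma sum_single: "x \<in> X \<Longrightarrow> finite X \<Longrightarrow> (\<And>l. l \<in> X \<Longrightarrow> l \<noteq> x \<Longrightarrow> f l = 0) \<Longrightarrow> (\<Sum>l\<in>X. f l) = f x"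
  by (subst sum.remove[of X x]) (auto intro: sum.neutral)

lemma row_mult:
  assumes x: "x < n" and M: "rowm x M" and M': "rowm x M'"
  shows "rowm x (mat_mult n cmp M M') \<and> mat_mult n cmp M M' x x = conv cmp (M x x) (M' x x)"
proof
  show "rowm x (mat_mult n cmp M M')"
    unfolding rowm_def
  proof (intro conjI allI impI)
    show "mat_mult n cmp M M' \<in> mat_alg n Hom" using M M' mm_in unfolding rowm_def by blast
    fix i j assume i: "i \<noteq> x"
    show "mat_mult n cmp M M' i j = 0"
    proof (cases "i < n \<and> j < n")
      case True
      then show ?thesis using M i unfolding rowm_def by (simp add: mm_entry)
    qed (simp add: mm_out)
  qed
  have "mat_mult n cmp M M' x x = (\<Sum>l<n. conv cmp (M x l) (M' l x))" using mm_entry[OF x x] .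
  also have "\<dots> = conv cmp (M x x) (M' x x)"
    by (rule sum_single) (use x M' in \<open>auto simp: rowm_def\<close>)
  finally show "mat_mult n cmp M M' x x = conv cmp (M x x) (M' x x)" .
qed

lemma row_mprod:
  assumes x: "x < n"
  shows "ms \<noteq> [] \<Longrightarrow> (\<forall>M\<in>set ms. rowm x M) \<Longrightarrow> rowm x (mprod (mat_mult n cmp) ms) \<and> mprod (mat_mult n cmp) ms x x = mprod (conv cmp) (map (\<lambda>M. M x x) ms)"
proof (induction ms)
  case (Cons M ms)
  show ?case
  proof (cases "ms = []")
    case True then show ?thesis using Cons by simp
  next
    case False
    then have IH: "rowm x (mprod (mat_mult n cmp) ms)" "mprod (mat_mult n cmp) ms x x = mprod (conv cmp) (map (\<lambda>M. M x x) ms)"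
      using Cons by auto
    have RM: "rowm x M" using Cons by simp
    show ?thesis using row_mult[OF x RM IH(1)] IH(2) False by (simp add: mprod_Cons)
  qed
qed simp

lemma row_trace: "x < n \<Longrightarrow> rowm x M \<Longrightarrow> mat_trace n \<alpha> M = alpha_lin \<alpha> x (M x x)"
  unfolding mat_trace_def by (rule sum_single) (auto simp: rowm_def)

lemma S_row:
  assumes x: "x < n" and a: "\<And>j. j < N \<Longrightarrow> rowm x (a j)"
  shows "S_tau (mat_mult n cmp) (mat_trace n \<alpha>) N a = S_tau (conv cmp) (alpha_lin \<alpha> x) N (\<lambda>j. a j x x)"
  unfolding S_tau_def
proof (intro sum.cong refl arg_cong2[where f="(*)"] prod.cong)
  fix p i assume p: "p \<in> {p. p permutes {..<N}}" and i: "i \<in> {i. i < N \<and> i = Min (orb p i)}"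
  then have p: "p permutes {..<N}" and i: "i < N" by auto
  define ms where "ms = map (\<lambda>k. a ((p ^^ k) i)) [0..<card (orb p i)]"
  have ne: "ms \<noteq> []" unfolding ms_def using card_orb_pos[OF perm_of_permutes[OF p]] by simp
  have rm: "\<forall>M\<in>set ms. rowm x M" unfolding ms_def using a funpow_lt[OF p i] by auto
  have "mat_trace n \<alpha> (cyc_word (mat_mult n cmp) a p i) = alpha_lin \<alpha> x (mprod (mat_mult n cmp) ms x x)"
    unfolding cyc_word_def ms_def[symmetric] using row_trace[OF x] row_mprod[OF x ne rm] by simp
  also have "\<dots> = alpha_lin \<alpha> x (cyc_word (conv cmp) (\<lambda>j. a j x x) p i)"
    unfolding cyc_word_def using row_mprod[OF x ne rm] unfolding ms_def by (simp add: comp_def)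
  finally show "mat_trace n \<alpha> (cyc_word (mat_mult n cmp) a p i) = alpha_lin \<alpha> x (cyc_word (conv cmp) (\<lambda>j. a j x x) p i)" .
qed

definition inblk :: "nat \<Rightarrow> nat \<Rightarrow> (nat \<Rightarrow> nat \<Rightarrow> 'm \<Rightarrow> 'k) \<Rightarrow> bool" where
  "inblk r s M \<longleftrightarrow> M \<in> mat_alg n Hom \<and> (\<forall>i j. (i, j) \<noteq> (r, s) \<longrightarrow> M i j = 0)"

definition blk :: "nat \<Rightarrow> nat \<Rightarrow> (nat \<Rightarrow> nat \<Rightarrow> 'm \<Rightarrow> 'k) \<Rightarrow> (nat \<Rightarrow> nat \<Rightarrow> 'm \<Rightarrow> 'k)" where
  "blk r s M = (\<lambda>i j. if i = r \<and> j = s then M i j else 0)"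

lemma blk_in: "M \<in> mat_alg n Hom \<Longrightarrow> inblk r s (blk r s M)"
  unfolding inblk_def blk_def mat_alg_iff by (auto simp: lin_zero)

lemma blk_sum:
  assumes M: "M \<in> mat_alg n Hom"
  shows "M = (\<Sum>t\<in>{..<n} \<times> {..<n}. blk (fst t) (snd t) M)"
proof (rule ext, rule ext)
  fix i j
  have "(\<Sum>t\<in>{..<n} \<times> {..<n}. blk (fst t) (snd t) M) i j = (\<Sum>t\<in>{..<n} \<times> {..<n}. blk (fst t) (snd t) M i j)"
    by (simp add: sum_fun_apply)
  also have "\<dots> = M i j"
  proof (cases "i < n \<and> j < n")
    case True
    then show ?thesis by (subst sum_single[of "(i, j)"]) (auto simp: blk_def)
  next
    case False
    then have "M i j = 0" using M unfolding mat_alg_iff by auto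
    then show ?thesis using False by (auto simp: blk_def intro!: sum.neutral)
  qed
  finally show "M i j = (\<Sum>t\<in>{..<n} \<times> {..<n}. blk (fst t) (snd t) M) i j" by simp
qed

lemma inblk_mult:
  assumes M: "inblk r s M" and M': "inblk r' s' M'"
  shows "inblk r s' (mat_mult n cmp M M')"
  unfolding inblk_def
proof (intro conjI allI impI)
  show "mat_mult n cmp M M' \<in> mat_alg n Hom" using M M' mm_in unfolding inblk_def by blast
  fix i j assume ij: "(i, j) \<noteq> (r, s')"
  show "mat_mult n cmp M M' i j = 0"
  proof (cases "i < n \<and> j < n")
    case True
    have "conv cmp (M i l) (M' l j) = 0" for l
      using M M' ij unfolding inblk_def by (cases "i = r") auto
    then show ?thesis using True by (simp add: mm_entry)
  qed (simp add: mm_out)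
qed

lemma inblk_row: "inblk x s M \<Longrightarrow> rowm x M"
  unfolding inblk_def rowm_def by auto

lemma inblk_alg: "inblk r s M \<Longrightarrow> M \<in> mat_alg n Hom"
  unfolding inblk_def by auto

end


lemma card_perm_count:
  assumes \<pi>: "\<pi> permutes {..<(N::nat)}"
  shows "card {j. j < N \<and> r (\<pi> j) = x} = card {j. j < N \<and> r j = x}"
proof -
  have "\<pi> ` {j. j < N \<and> r (\<pi> j) = x} = {j. j < N \<and> r j = x}"
  proof
    show "\<pi> ` {j. j < N \<and> r (\<pi> j) = x} \<subseteq> {j. j < N \<and> r j = x}"
      using permutes_in_image[OF \<pi>] by auto
    show "{j. j < N \<and> r j = x} \<subseteq> \<pi> ` {j. j < N \<and> r (\<pi> j) = x}"
    proof
      fix j assume j: "j \<in> {j. j < N \<and> r j = x}"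
      have "inv \<pi> j < N" using permutes_in_image[OF permutes_inv[OF \<pi>]] j by auto
      then show "j \<in> \<pi> ` {j. j < N \<and> r (\<pi> j) = x}"
        using j permutes_inverses(1)[OF \<pi>] by (auto intro!: image_eqI[of _ _ "inv \<pi> j"])
    qed
  qed
  moreover have "inj_on \<pi> {j. j < N \<and> r (\<pi> j) = x}" using permutes_inj[OF \<pi>] by (auto simp: inj_on_def inj_def)
  ultimately show ?thesis by (metis card_image)
qed

context catl begin

interpretation M: talg "mat_alg n Hom" "mat_mult n cmp" "mat_trace n \<alpha>" by (rule talg_mat)

lemma contraction:
  assumes x: "x < n" and van: "\<And>m. d < m \<Longrightarrow> S_vanishes (lin (Hom x x)) (conv cmp) (alpha_lin \<alpha> x) m"
  shows "(\<forall>j<N. r j < n \<and> s j < n \<and> inblk (r j) (s j) (a j)) \<Longrightarrow> d < card {j. j < N \<and> r j = x}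
     \<Longrightarrow> S_tau (mat_mult n cmp) (mat_trace n \<alpha>) N a = 0"
proof (induction N arbitrary: a r s)
  case 0 then show ?case by simp
next
  case (Suc M)
  note hyp = Suc.prems(1)
  show ?case
  proof (cases "\<forall>t<Suc M. r t = x")
    case True
    have rows: "rowm x (a j)" if "j < Suc M" for j using hyp True that by (auto intro: inblk_row)
    have "{j. j < Suc M \<and> r j = x} = {..<Suc M}" using True by auto
    then have "d < Suc M" using Suc.prems(2) by simp
    then have v: "S_vanishes (lin (Hom x x)) (conv cmp) (alpha_lin \<alpha> x) (Suc M)" by (rule van)
    have "a j x x \<in> lin (Hom x x)" if "j < Suc M" for j
      using rows[OF that] x unfolding rowm_def mat_alg_iff by auto
    then have "S_tau (conv cmp) (alpha_lin \<alpha> x) (Suc M) (\<lambda>j. a j x x) = 0"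
      using v unfolding S_vanishes_def by auto
    then show ?thesis using S_row[OF x rows] by simp
  next
    case False
    then obtain t where t: "t < Suc M" "r t \<noteq> x" by auto
    define \<pi> where "\<pi> = Transposition.transpose t M"
    have \<pi>: "\<pi> permutes {..<Suc M}" unfolding \<pi>_def using t by (intro permutes_swap_id) auto
    define a' where "a' = a \<circ> \<pi>"
    define r' where "r' = r \<circ> \<pi>"
    define s' where "s' = s \<circ> \<pi>"
    have piM: "\<pi> M = t" unfolding \<pi>_def by simp
    have hyp': "r' j < n \<and> s' j < n \<and> inblk (r' j) (s' j) (a' j)" if "j < Suc M" for j
      unfolding r'_def s'_def a'_def using hyp permutes_in_image[OF \<pi>] that by auto
    have aA: "a j \<in> mat_alg n Hom" if "j < Suc M" for j using hyp that inblk_alg by blast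
    have a'A: "a' j \<in> mat_alg n Hom" if "j < Suc M" for j using hyp' that inblk_alg by blast
    have cnt: "card {j. j < M \<and> r' j = x} = card {j. j < Suc M \<and> r j = x}"
    proof -
      have "{j. j < Suc M \<and> r' j = x} = {j. j < M \<and> r' j = x}"
        using t piM unfolding r'_def by (auto simp: less_Suc_eq)
      then show ?thesis using card_perm_count[OF \<pi>, of r x] unfolding r'_def comp_def by simp
    qed
    have e1: "S_tau (mat_mult n cmp) (mat_trace n \<alpha>) (Suc M) a = S_tau (mat_mult n cmp) (mat_trace n \<alpha>) (Suc M) a'"
      unfolding a'_def using M.S_perm[OF \<pi>, of a] aA by simp
    have z1: "S_tau (mat_mult n cmp) (mat_trace n \<alpha>) M a' = 0"
      by (rule Suc.IH[of r' s']) (use hyp' cnt Suc.prems(2) in auto)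
    have z2: "S_tau (mat_mult n cmp) (mat_trace n \<alpha>) M (a'(j := mat_mult n cmp (a' j) (a' M))) = 0" if j: "j < M" for j
    proof (rule Suc.IH[of r' "s'(j := s' M)"])
      show "\<forall>i<M. r' i < n \<and> (s'(j := s' M)) i < n \<and> inblk (r' i) ((s'(j := s' M)) i) ((a'(j := mat_mult n cmp (a' j) (a' M))) i)"
      proof -
        have "inblk (r' j) (s' M) (mat_mult n cmp (a' j) (a' M))"
          using hyp'[of j] hyp'[of M] j by (intro inblk_mult[of "r' j" "s' j" _ "r' M" "s' M"]) auto
        then show ?thesis using hyp' j by auto
      qed
      show "d < card {i. i < M \<and> r' i = x}" using cnt Suc.prems(2) by simp
    qed
    have "S_tau (mat_mult n cmp) (mat_trace n \<alpha>) (Suc M) a' = mat_trace n \<alpha> (a' M) * S_tau (mat_mult n cmp) (mat_trace n \<alpha>) M a'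
       - (\<Sum>j<M. S_tau (mat_mult n cmp) (mat_trace n \<alpha>) M (a'(j := mat_mult n cmp (a' j) (a' M))))"
      by (rule M.remove_last) (use a'A in auto)
    then show ?thesis using e1 z1 z2 by simp
  qed
qed

end


lemma count_sum:
  assumes r: "\<And>j. j < N \<Longrightarrow> r j < (n::nat)"
  shows "(\<Sum>x<n. card {j. j < N \<and> r j = x}) = N"
proof -
  have "(\<Sum>x<n. card {j. j < N \<and> r j = x}) = (\<Sum>x<n. \<Sum>j<N. if r j = x then 1 else 0)"
  proof (intro sum.cong refl)
    fix x
    have "card {j. j < N \<and> r j = x} = card {j \<in> {..<N}. r j = x}" by (simp add: Collect_conj_eq lessThan_def)
    also have "\<dots> = (\<Sum>j\<in>{j \<in> {..<N}. r j = x}. 1)" by simp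
    also have "\<dots> = (\<Sum>j<N. if r j = x then 1 else 0)" by (rule sum.inter_filter) simp
    finally show "card {j. j < N \<and> r j = x} = (\<Sum>j<N. if r j = x then 1 else 0)" .
  qed
  also have "\<dots> = (\<Sum>j<N. \<Sum>x<n. if r j = x then 1 else 0)" by (rule sum.swap)
  also have "\<dots> = (\<Sum>j<N. 1)" using r by (intro sum.cong refl) (simp add: sum.delta)
  finally show ?thesis by simp
qed

lemma pigeon:
  assumes r: "\<And>j. j < N \<Longrightarrow> r j < (n::nat)" and N: "(\<Sum>x<n. d x) < N"
  shows "\<exists>x<n. d x < card {j. j < N \<and> r j = x}"
proof (rule ccontr)
  assume "\<not> ?thesis"
  then have "(\<Sum>x<n. card {j. j < N \<and> r j = x}) \<le> (\<Sum>x<n. d x)" by (intro sum_mono) auto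
  then show False using count_sum[OF r] N by simp
qed

context catl begin

interpretation M: talg "mat_alg n Hom" "mat_mult n cmp" "mat_trace n \<alpha>" by (rule talg_mat)

lemma upper:
  assumes van: "\<And>x m. x < n \<Longrightarrow> d x < m \<Longrightarrow> S_vanishes (lin (Hom x x)) (conv cmp) (alpha_lin \<alpha> x) m"
  shows "S_vanishes (mat_alg n Hom) (mat_mult n cmp) (mat_trace n \<alpha>) (Suc (\<Sum>x<n. d x))"
  unfolding S_vanishes_def
proof (intro allI impI)
  fix a :: "nat \<Rightarrow> nat \<Rightarrow> nat \<Rightarrow> 'm \<Rightarrow> 'k" assume a: "\<forall>i<Suc (\<Sum>x<n. d x). a i \<in> mat_alg n Hom"
  define N where "N = Suc (\<Sum>x<n. d x)"
  define T where "T = {..<n} \<times> {..<n}"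
  define b where "b j t = blk (fst t) (snd t) (a j)" for j t
  have bA: "b j t \<in> mat_alg n Hom" if "j < N" for j t
    unfolding b_def using a that blk_in inblk_alg unfolding N_def by blast
  have "S_tau (mat_mult n cmp) (mat_trace n \<alpha>) N a = S_tau (mat_mult n cmp) (mat_trace n \<alpha>) N (\<lambda>j. \<Sum>t\<in>T. b j t)"
    by (rule S_cong) (use a blk_sum in \<open>auto simp: b_def T_def N_def\<close>)
  also have "\<dots> = (\<Sum>\<phi>\<in>PiE {..<N} (\<lambda>_. T). S_tau (mat_mult n cmp) (mat_trace n \<alpha>) N (\<lambda>j. b j (\<phi> j)))"
    by (rule M.S_multi) (auto simp: T_def bA)
  also have "\<dots> = 0"
  proof (rule sum.neutral, rule ballI)
    fix \<phi> assume \<phi>: "\<phi> \<in> PiE {..<N} (\<lambda>_. T)"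
    define r where "r j = fst (\<phi> j)" for j
    define s where "s j = snd (\<phi> j)" for j
    have rs: "r j < n \<and> s j < n \<and> inblk (r j) (s j) (b j (\<phi> j))" if "j < N" for j
    proof -
      have "\<phi> j \<in> T" using \<phi> that by auto
      then show ?thesis unfolding r_def s_def b_def T_def using blk_in a that unfolding N_def by auto
    qed
    obtain x where x: "x < n" "d x < card {j. j < N \<and> r j = x}"
      using pigeon[of N r n d] rs unfolding N_def by auto
    show "S_tau (mat_mult n cmp) (mat_trace n \<alpha>) N (\<lambda>j. b j (\<phi> j)) = 0"
      by (rule contraction[OF x(1), where d="d x" and r=r and s=s]) (use van x rs in auto)
  qed
  finally show "S_tau (mat_mult n cmp) (mat_trace n \<alpha>) (Suc (\<Sum>x<n. d x)) a = 0" unfolding N_def .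
qed

end


context catl begin

interpretation M: talg "mat_alg n Hom" "mat_mult n cmp" "mat_trace n \<alpha>" by (rule talg_mat)

definition emb :: "nat \<Rightarrow> ('m \<Rightarrow> 'k) \<Rightarrow> (nat \<Rightarrow> nat \<Rightarrow> 'm \<Rightarrow> 'k)" where
  "emb r c = (\<lambda>i j. if i = r \<and> j = r then c else 0)"

definition bdr :: "nat \<Rightarrow> (nat \<Rightarrow> nat \<Rightarrow> 'm \<Rightarrow> 'k) \<Rightarrow> bool" where
  "bdr r M \<longleftrightarrow> M \<in> mat_alg n Hom \<and> (\<forall>i j. \<not> (i < r \<and> j < r) \<longrightarrow> M i j = 0)"

lemma emb_inblk: "r < n \<Longrightarrow> c \<in> lin (Hom r r) \<Longrightarrow> inblk r r (emb r c)"
  unfolding inblk_def emb_def mat_alg_iff by (auto simp: lin_zero)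

lemma emb_mult:
  assumes r: "r < n" and c: "c \<in> lin (Hom r r)" and c': "c' \<in> lin (Hom r r)"
  shows "mat_mult n cmp (emb r c) (emb r c') = emb r (conv cmp c c')"
proof -
  have ib: "inblk r r (mat_mult n cmp (emb r c) (emb r c'))"
    using inblk_mult[OF emb_inblk[OF r c] emb_inblk[OF r c']] .
  have rr: "mat_mult n cmp (emb r c) (emb r c') r r = conv cmp c c'"
    using row_mult[OF r inblk_row[OF emb_inblk[OF r c]] inblk_row[OF emb_inblk[OF r c']]] by (simp add: emb_def)
  show ?thesis
  proof (rule ext, rule ext)
    fix i j
    show "mat_mult n cmp (emb r c) (emb r c') i j = emb r (conv cmp c c') i j"
      using ib rr unfolding inblk_def emb_def by (cases "i = r \<and> j = r") auto
  qed
qed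

lemma orth:
  assumes u: "bdr r u"
  shows "mat_mult n cmp u (emb r c) = 0"
proof (rule ext, rule ext)
  fix i j
  show "mat_mult n cmp u (emb r c) i j = 0 i j"
  proof (cases "i < n \<and> j < n")
    case True
    have "conv cmp (u i l) (emb r c l j) = 0" for l
      using u unfolding bdr_def emb_def by (cases "l = r \<and> j = r") auto
    then show ?thesis using True by (simp add: mm_entry)
  qed (simp add: mm_out)
qed

lemma lower:
  assumes cs: "\<And>x. x < n \<Longrightarrow> \<exists>c. (\<forall>j<d x. c j \<in> lin (Hom x x)) \<and> S_tau (conv cmp) (alpha_lin \<alpha> x) (d x) c \<noteq> 0"
  shows "r \<le> n \<Longrightarrow> \<exists>a. (\<forall>j<(\<Sum>x<r. d x). bdr r (a j)) \<and> S_tau (mat_mult n cmp) (mat_trace n \<alpha>) (\<Sum>x<r. d x) a \<noteq> 0"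
proof (induction r)
  case 0
  show ?case using M.S_0 by auto
next
  case (Suc r)
  then have r: "r < n" by simp
  obtain a where a: "\<forall>j<(\<Sum>x<r. d x). bdr r (a j)" and Sa: "S_tau (mat_mult n cmp) (mat_trace n \<alpha>) (\<Sum>x<r. d x) a \<noteq> 0"
    using Suc by auto
  obtain c where c: "\<forall>j<d r. c j \<in> lin (Hom r r)" and Sc: "S_tau (conv cmp) (alpha_lin \<alpha> r) (d r) c \<noteq> 0"
    using cs[OF r] by auto
  define p where "p = (\<Sum>x<r. d x)"
  define v where "v j = emb r (c j)" for j
  define w where "w = (\<lambda>i. if i < p then a i else v (i - p))"
  let ?U = "{M. bdr r M}"
  let ?V = "{emb r c | c. c \<in> lin (Hom r r)}"
  have conc: "S_tau (mat_mult n cmp) (mat_trace n \<alpha>) (p + d r) w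
      = S_tau (mat_mult n cmp) (mat_trace n \<alpha>) p a * S_tau (mat_mult n cmp) (mat_trace n \<alpha>) (d r) v"
    unfolding w_def
  proof (rule M.S_concat[where U="?U" and V="?V"])
    show "?U \<subseteq> mat_alg n Hom" unfolding bdr_def by auto
    show "?V \<subseteq> mat_alg n Hom" using emb_inblk[OF r] inblk_alg by blast
    show "mat_mult n cmp x y = 0" if "x \<in> ?U" "y \<in> ?V" for x y using that orth by auto
    show "mat_mult n cmp x y \<in> ?V" if "x \<in> ?V" "y \<in> ?V" for x y
      using that emb_mult[OF r] conv_lin[OF r r r] by blast
    show "a i \<in> ?U" if "i < p" for i using a that unfolding p_def by auto
    show "v i \<in> ?V" if "i < d r" for i unfolding v_def using c that by auto
  qed
  have rows: "rowm r (v j)" if "j < d r" for j unfolding v_def using emb_inblk[OF r] c that inblk_row by blast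
  have "S_tau (mat_mult n cmp) (mat_trace n \<alpha>) (d r) v = S_tau (conv cmp) (alpha_lin \<alpha> r) (d r) (\<lambda>j. v j r r)"
    by (rule S_row[OF r rows])
  also have "\<dots> = S_tau (conv cmp) (alpha_lin \<alpha> r) (d r) c" unfolding v_def emb_def by simp
  finally have Sv: "S_tau (mat_mult n cmp) (mat_trace n \<alpha>) (d r) v \<noteq> 0" using Sc by simp
  have "bdr (Suc r) (w j)" if "j < p + d r" for j
  proof (cases "j < p")
    case True then show ?thesis using a unfolding w_def p_def bdr_def by auto
  next
    case False
    then have "j - p < d r" using that by simp
    then have "c (j - p) \<in> lin (Hom r r)" using c by simp
    then show ?thesis using False inblk_alg[OF emb_inblk[OF r]] unfolding w_def v_def bdr_def emb_def by auto
  qed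
  moreover have "S_tau (mat_mult n cmp) (mat_trace n \<alpha>) (p + d r) w \<noteq> 0"
    using conc Sa Sv unfolding p_def by simp
  ultimately show ?case unfolding p_def by auto
qed

end


lemma sum_enat: "(\<Sum>i\<in>I. enat (f i)) = enat (\<Sum>i\<in>I. f i)"
  by (induction I rule: infinite_finite_induct) (auto simp: zero_enat_def)

theorem mainTheorem5:
  fixes n :: nat
    and Hom :: "nat \<Rightarrow> nat \<Rightarrow> 'm set"
    and cmp :: "'m \<Rightarrow> 'm \<Rightarrow> 'm"
    and idm :: "nat \<Rightarrow> 'm"
    and \<alpha> :: "nat \<times> 'm \<Rightarrow> 'k::field_char_0"
  assumes "is_category n Hom cmp idm"
    and "pseudocharacter_cat n Hom cmp \<alpha>"
  shows "(\<forall>x\<in>mat_alg n Hom. \<forall>y\<in>mat_alg n Hom.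
            mat_trace n \<alpha> (mat_mult n cmp x y) = mat_trace n \<alpha> (mat_mult n cmp y x))
    \<and> alg_deg (mat_alg n Hom) (mat_mult n cmp) (mat_trace n \<alpha>) \<noteq> \<infinity>
    \<and> alg_deg (mat_alg n Hom) (mat_mult n cmp) (mat_trace n \<alpha>) = (\<Sum>i<n. obj_deg Hom cmp \<alpha> i)"
proof -
  have lfa: "loop_function n Hom cmp \<alpha>" and fin: "\<And>i. i < n \<Longrightarrow> obj_deg Hom cmp \<alpha> i \<noteq> \<infinity>"
    using assms(2) unfolding pseudocharacter_cat_def by auto
  interpret catl n Hom cmp idm \<alpha> by unfold_locales (fact assms(1), fact lfa)
  interpret M: talg "mat_alg n Hom" "mat_mult n cmp" "mat_trace n \<alpha>" by (rule talg_mat)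
  let ?V = "\<lambda>i m. S_vanishes (lin (Hom i i)) (conv cmp) (alpha_lin \<alpha> i) m"
  define d where "d i = (LEAST d. ?V i (Suc d))" for i
  have ex: "\<exists>d. ?V i (Suc d)" if "i < n" for i
    using fin[OF that] unfolding obj_deg_def alg_deg_def by (auto split: if_splits)
  have od: "obj_deg Hom cmp \<alpha> i = enat (d i)" if "i < n" for i
    using ex[OF that] unfolding obj_deg_def alg_deg_def d_def by simp
  have vd: "?V i (Suc (d i))" if "i < n" for i
    unfolding d_def using LeastI_ex[OF ex[OF that]] .
  have van: "?V x m" if x: "x < n" and m: "d x < m" for x m
    using talg.propagate[OF talg_obj[OF x] vd[OF x]] m by simp
  have cs: "\<exists>c. (\<forall>j<d x. c j \<in> lin (Hom x x)) \<and> S_tau (conv cmp) (alpha_lin \<alpha> x) (d x) c \<noteq> 0"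
    if x: "x < n" for x
  proof (cases "d x")
    case 0
    then show ?thesis using talg.S_0[OF talg_obj[OF x]] by auto
  next
    case (Suc e)
    then have "\<not> ?V x (Suc e)" using not_less_Least[of e "\<lambda>d. ?V x (Suc d)"] unfolding d_def by auto
    then show ?thesis unfolding S_vanishes_def Suc by auto
  qed
  define D where "D = (\<Sum>x<n. d x)"
  have up: "S_vanishes (mat_alg n Hom) (mat_mult n cmp) (mat_trace n \<alpha>) (Suc D)"
    unfolding D_def by (rule upper) (use van in auto)
  obtain a where a: "\<forall>j<D. bdr n (a j)" and Sa: "S_tau (mat_mult n cmp) (mat_trace n \<alpha>) D a \<noteq> 0"
    using lower[OF cs, of n] unfolding D_def by auto
  have nv: "\<not> S_vanishes (mat_alg n Hom) (mat_mult n cmp) (mat_trace n \<alpha>) D"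
    using a Sa unfolding S_vanishes_def bdr_def by auto
  have least: "(LEAST d. S_vanishes (mat_alg n Hom) (mat_mult n cmp) (mat_trace n \<alpha>) (Suc d)) = D"
  proof (rule Least_equality)
    show "S_vanishes (mat_alg n Hom) (mat_mult n cmp) (mat_trace n \<alpha>) (Suc D)" by (rule up)
    fix y assume y: "S_vanishes (mat_alg n Hom) (mat_mult n cmp) (mat_trace n \<alpha>) (Suc y)"
    show "D \<le> y"
    proof (rule ccontr)
      assume "\<not> D \<le> y"
      then have "Suc y \<le> D" by simp
      then have "S_vanishes (mat_alg n Hom) (mat_mult n cmp) (mat_trace n \<alpha>) D" by (rule M.propagate[OF y])
      then show False using nv by simp
    qed
  qed
  have deg: "alg_deg (mat_alg n Hom) (mat_mult n cmp) (mat_trace n \<alpha>) = enat D"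
    unfolding alg_deg_def using up least by auto
  have sum: "(\<Sum>i<n. obj_deg Hom cmp \<alpha> i) = enat D"
    unfolding D_def sum_enat[symmetric] by (rule sum.cong) (auto simp: od)
  show ?thesis using deg sum mt_comm by auto
qed

end
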